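(* Consider $X_t=\mu_t+e_t$, $1\le t\le T$, with $Ee_t=0$, under the at-most-one-change alternative $\mu_1=\cdots=\mu_{t^*}$, $\mu_{t^*+1}=\cdots=\mu_T$, where $1<t^*<T$ and $\Delta=\mu_{t^*+1}-\mu_{t^*}$ may both depend on $T$. Define $$A_T=\frac1{T^{1/2}}\max_{1\le t\le T}\Big|\sum_{s=1}^tX_s-\frac tT\sum_{s=1}^TX_s\Big|,\qquad D_T=\max_{t_T\le t\le T-t_T}\left|\frac1t\sum_{s=1}^tX_s-\frac1{T-t}\sum_{s=t+1}^TX_s\right|.$$ (i) If Assumption (A) holds, then $A_T\xrightarrow{P}\infty$ if and only if $T^{-3/2}t^*(T-t^* )|\Delta|\to\infty$. (ii) If $t_T\to\infty$, $t_T/T\to0$ and Assumption (A) holds, then $t_T^{1/2}D_T\xrightarrow{P}\infty$ if and only if $\min(t^*,T-t^*,t_T)\,t_T^{-1/2}|\Delta|\to\infty$.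
   Context: Assumption (A): for each $T$ there are independent standard Wiener processes $\{W_{T,1}(x),0\le x\le T/2\}$, $\{W_{T,2}(x),0\le x\le T/2\}$ with $\max_{1\le x\le T/2}x^{-\kappa}|\sum_{s=1}^{\lfloor x\rfloor}e_s-\sigma W_{T,1}(x)|=O_P(1)$ and $\max_{T/2\le x\le T-1}(T-x)^{-\kappa}|\sum_{s=\lfloor x\rfloor+1}^{T}e_s-\sigma W_{T,2}(T-x)|=O_P(1)$, for some $\sigma>0$, $0<\kappa<1/2$. *)

theory Defs
  imports "HOL-Probability.Probability"
begin

definition std_wiener_on :: "'a measure \<Rightarrow> real \<Rightarrow> (real \<Rightarrow> 'a \<Rightarrow> real) \<Rightarrow> bool" where
  "std_wiener_on M L W \<longleftrightarrow>
     (\<forall>x\<in>{0..L}. W x \<in> borel_measurable M) \<and>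
     (AE \<omega> in M. W 0 \<omega> = 0 \<and> continuous_on {0..L} (\<lambda>x. W x \<omega>)) \<and>
     (\<forall>s t. 0 \<le> s \<and> s < t \<and> t \<le> L \<longrightarrow>
        distributed M lborel (\<lambda>\<omega>. W t \<omega> - W s \<omega>)
          (\<lambda>y. ennreal (normal_density 0 (sqrt (t - s)) y))) \<and>
     (\<forall>(n::nat) (u::nat \<Rightarrow> real). 0 \<le> u 0 \<and> u n \<le> L \<and> (\<forall>i<n. u i < u (Suc i)) \<longrightarrow>
        prob_space.indep_vars M (\<lambda>_. borel) (\<lambda>i \<omega>. W (u (Suc i)) \<omega> - W (u i) \<omega>) {..<n})"

definition indep_processes_on :: "'a measure \<Rightarrow> real \<Rightarrow> (real \<Rightarrow> 'a \<Rightarrow> real) \<Rightarrow> (real \<Rightarrow> 'a \<Rightarrow> real) \<Rightarrow> bool" where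
  "indep_processes_on M L W1 W2 \<longleftrightarrow>
     prob_space.indep_var M (Pi\<^sub>M {0..L} (\<lambda>_. borel)) (\<lambda>\<omega>. \<lambda>x\<in>{0..L}. W1 x \<omega>)
                            (Pi\<^sub>M {0..L} (\<lambda>_. borel)) (\<lambda>\<omega>. \<lambda>x\<in>{0..L}. W2 x \<omega>)"

text \<open>O_P(1) for the supremum over x \<in> I T of F T x (outer probability, to avoid measurability issues):
  for every eps > 0 there is C such that for all large T, P*(sup_{x \<in> I T} F T x > C) < eps.\<close>
definition OP1_sup :: "'a measure \<Rightarrow> (nat \<Rightarrow> real set) \<Rightarrow> (nat \<Rightarrow> real \<Rightarrow> 'a \<Rightarrow> real) \<Rightarrow> bool" where
  "OP1_sup M I F \<longleftrightarrow>
     (\<forall>\<epsilon>>0. \<exists>C. \<exists>T0. \<forall>T\<ge>T0. \<exists>A\<in>sets M.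
        {\<omega>\<in>space M. \<exists>x\<in>I T. F T x \<omega> > C} \<subseteq> A \<and> measure M A < \<epsilon>)"

text \<open>Assumption (A) for the error sequence e_1, e_2, ... (index 0 unused).\<close>
definition assumption_A :: "'a measure \<Rightarrow> (nat \<Rightarrow> 'a \<Rightarrow> real) \<Rightarrow> bool" where
  "assumption_A M e \<longleftrightarrow>
    (\<exists>\<sigma>>0. \<exists>\<kappa>. 0 < \<kappa> \<and> \<kappa> < 1/2 \<and>
      (\<exists>W1 W2 :: nat \<Rightarrow> real \<Rightarrow> 'a \<Rightarrow> real.
         (\<forall>T. std_wiener_on M (real T / 2) (W1 T) \<and> std_wiener_on M (real T / 2) (W2 T) \<and>
              indep_processes_on M (real T / 2) (W1 T) (W2 T)) \<and>
         OP1_sup M (\<lambda>T. {1 .. real T / 2})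
           (\<lambda>T x \<omega>. x powr (-\<kappa>) * \<bar>(\<Sum>s=1..nat \<lfloor>x\<rfloor>. e s \<omega>) - \<sigma> * W1 T x \<omega>\<bar>) \<and>
         OP1_sup M (\<lambda>T. {real T / 2 .. real T - 1})
           (\<lambda>T x \<omega>. (real T - x) powr (-\<kappa>) *
              \<bar>(\<Sum>s\<in>{nat \<lfloor>x\<rfloor> + 1 .. T}. e s \<omega>) - \<sigma> * W2 T (real T - x) \<omega>\<bar>)))"

definition A_stat :: "(nat \<Rightarrow> 'a \<Rightarrow> real) \<Rightarrow> nat \<Rightarrow> 'a \<Rightarrow> real" where
  "A_stat X T \<omega> = (1 / sqrt (real T)) *
     Max ((\<lambda>t. \<bar>(\<Sum>s=1..t. X s \<omega>) - real t / real T * (\<Sum>s=1..T. X s \<omega>)\<bar>) ` {1..T})"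

definition D_stat :: "(nat \<Rightarrow> 'a \<Rightarrow> real) \<Rightarrow> nat \<Rightarrow> nat \<Rightarrow> 'a \<Rightarrow> real" where
  "D_stat X T m \<omega> =
     Max ((\<lambda>t. \<bar>(\<Sum>s=1..t. X s \<omega>) / real t - (\<Sum>s=t+1..T. X s \<omega>) / real (T - t)\<bar>) ` {m..T - m})"

definition diverges_in_prob :: "'a measure \<Rightarrow> (nat \<Rightarrow> 'a \<Rightarrow> real) \<Rightarrow> bool" where
  "diverges_in_prob M Y \<longleftrightarrow>
     (\<forall>C. ((\<lambda>T. measure M {\<omega>\<in>space M. Y T \<omega> \<le> C}) \<longlongrightarrow> 0) sequentially)"

end

theory Submission
  imports Defs
begin

lemma normal_markov4:
  assumes M: "prob_space M" and s: "s > 0"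
    and d: "distributed M lborel X (\<lambda>y. ennreal (normal_density 0 (sqrt s) y))" and a: "a > 0"
  shows "measure M {\<omega>\<in>space M. a < \<bar>X \<omega>\<bar>} \<le> 3 * s ^ 2 / a ^ 4"
proof -
  interpret prob_space M by fact
  have Xm[measurable]: "X \<in> borel_measurable M" using d by (simp add: distributed_def)
  have hb: "has_bochner_integral lborel (\<lambda>x. normal_density 0 (sqrt s) x * (x - 0) ^ (2 * 2))
      (fact (2 * 2) / ((2 / (sqrt s)\<^sup>2)^2 * fact 2))"
    by (rule normal_moment_even) (use s in auto)
  have val: "(fact (2 * 2) / ((2 / (sqrt s)\<^sup>2)^2 * fact 2) :: real) = 3 * s^2"
    using s by (simp add: fact_numeral power2_eq_square field_simps)
  have i1: "integrable lborel (\<lambda>x. normal_density 0 (sqrt s) x * x ^ 4)"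
    using hb by (simp add: has_bochner_integral_iff)
  have int: "integrable M (\<lambda>\<omega>. X \<omega> ^ 4)"
    using distributed_integrable[OF d, of "\<lambda>x. x^4"] i1 by (simp add: normal_density_nonneg)
  have ival: "(\<integral>\<omega>. X \<omega> ^ 4 \<partial>M) = 3 * s^2"
  proof -
    have "(\<integral>x. normal_density 0 (sqrt s) x * x ^ 4 \<partial>lborel) = (\<integral>\<omega>. X \<omega> ^ 4 \<partial>M)"
      using distributed_integral[OF d, of "\<lambda>x. x^4"] by (simp add: normal_density_nonneg)
    moreover have "(\<integral>x. normal_density 0 (sqrt s) x * x ^ 4 \<partial>lborel) = 3 * s^2"
      using hb val by (simp add: has_bochner_integral_iff)
    ultimately show ?thesis by simp
  qed
  have "{\<omega>\<in>space M. a < \<bar>X \<omega>\<bar>} \<subseteq> {\<omega>\<in>space M. a^4 \<le> X \<omega> ^ 4}"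
  proof safe
    fix \<omega> assume "a < \<bar>X \<omega>\<bar>"
    then have "a^4 \<le> \<bar>X \<omega>\<bar>^4" using a by (intro power_mono) auto
    then show "a^4 \<le> X \<omega> ^ 4" by (simp add: power_even_abs_numeral)
  qed
  then have "measure M {\<omega>\<in>space M. a < \<bar>X \<omega>\<bar>} \<le> measure M {\<omega>\<in>space M. a^4 \<le> X \<omega> ^ 4}"
    by (intro finite_measure_mono) auto
  also have "\<dots> \<le> (\<integral>\<omega>. X \<omega> ^ 4 \<partial>M) / a^4"
    by (rule integral_Markov_inequality_measure[OF int]) (use a in auto)
  finally show ?thesis using ival by simp
qed

lemma floor_double: "\<lfloor>2 * x\<rfloor> = 2 * \<lfloor>x\<rfloor> \<or> \<lfloor>2 * (x::real)\<rfloor> = 2 * \<lfloor>x\<rfloor> + 1"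
proof -
  have a: "real_of_int \<lfloor>x\<rfloor> \<le> x" "x < real_of_int \<lfloor>x\<rfloor> + 1" by linarith+
  show ?thesis
  proof (cases "2 * x < 2 * real_of_int \<lfloor>x\<rfloor> + 1")
    case True
    then have "\<lfloor>2 * x\<rfloor> = 2 * \<lfloor>x\<rfloor>" using a by (subst floor_eq_iff) auto
    then show ?thesis by simp
  next
    case False
    then have "\<lfloor>2 * x\<rfloor> = 2 * \<lfloor>x\<rfloor> + 1" proof (subst floor_eq_iff)
      have "real_of_int (2*\<lfloor>x\<rfloor>+1) = 2*real_of_int \<lfloor>x\<rfloor> + 1" by simp
      then show "real_of_int (2*\<lfloor>x\<rfloor>+1) \<le> 2 * x \<and> 2 * x < real_of_int (2*\<lfloor>x\<rfloor>+1) + 1"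
        using a False by linarith
    qed
    then show ?thesis by simp
  qed
qed

lemma geom_sum_9: "(\<Sum>j<K. (9/10::real)^(Suc j)) = 9 - 9 * (9/10)^K"
  by (induction K) (auto simp: field_simps)

lemma geom_sum_gen: assumes "q \<noteq> (1::real)" shows "(\<Sum>j<K. q^(Suc j)) = q * (1 - q^K) / (1 - q)"
proof -
  have "(\<Sum>j<K. q^(Suc j)) = q * (\<Sum>j<K. q^j)" by (simp add: sum_distrib_left)
  then show ?thesis using assms by (simp add: sum_gp_strict)
qed

lemma geom_sum_le: assumes "0 \<le> q" "q < (1::real)" shows "(\<Sum>j<K. q^(Suc j)) \<le> q / (1 - q)"
proof -
  have "(\<Sum>j<K. q^(Suc j)) = q * (1 - q^K) / (1 - q)" using geom_sum_gen assms by simp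
  also have "\<dots> \<le> q / (1 - q)" using assms by (intro divide_right_mono) (auto simp: mult_left_le)
  finally show ?thesis .
qed

lemma arith1:
  fixes lam n :: real assumes "lam > 0"
  shows "3 * (n / 2^m)^2 / (lam * ((1/36) * (9/10)^m))^4 = 3 * 36^4 * n^2 / lam^4 * (10000/26244::real)^m"
proof -
  have a0: "((2::real)^m)^2 = 4^m" by (simp add: power2_eq_square flip: power_mult_distrib)
  have a: "(n / 2^m)^2 = n^2 / 4^m" by (simp add: power_divide a0)
  have b0: "((9/10::real)^m)^4 = ((9/10)^4)^m" by (metis power_mult mult.commute)
  have b: "(lam * ((1/36) * (9/10)^m))^4 = lam^4 / 36^4 * (6561/10000)^m"
    unfolding power_mult_distrib b0 by (simp add: power_divide)
  have c: "(4::real)^m * (6561/10000)^m = (26244/10000)^m" by (simp add: power_mult_distrib[symmetric])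
  show ?thesis unfolding a b using assms
    by (simp add: field_simps c power_divide flip: power_mult_distrib)
qed

locale gproc = prob_space M for M :: "'a measure" +
  fixes Z :: "real \<Rightarrow> 'a \<Rightarrow> real" and L :: real
  assumes Zmeas: "\<And>x. x \<in> {0..L} \<Longrightarrow> Z x \<in> borel_measurable M"
    and Zdist: "\<And>s t. 0 \<le> s \<Longrightarrow> s < t \<Longrightarrow> t \<le> L \<Longrightarrow>
        distributed M lborel (\<lambda>\<omega>. Z t \<omega> - Z s \<omega>) (\<lambda>y. ennreal (normal_density 0 (sqrt (t - s)) y))"
begin

lemma incr_sets: "0 \<le> s \<Longrightarrow> s \<le> L \<Longrightarrow> 0 \<le> t \<Longrightarrow> t \<le> L \<Longrightarrow> {\<omega>\<in>space M. \<theta> < \<bar>Z t \<omega> - Z s \<omega>\<bar>} \<in> sets M"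
proof -
  assume "0 \<le> s" "s \<le> L" "0 \<le> t" "t \<le> L"
  then have [measurable]: "Z s \<in> borel_measurable M" "Z t \<in> borel_measurable M" using Zmeas by auto
  show ?thesis by measurable
qed

lemma incr_bound:
  assumes "0 \<le> s" "s \<le> t" "t \<le> L" "0 < \<theta>"
  shows "measure M {\<omega>\<in>space M. \<theta> < \<bar>Z t \<omega> - Z s \<omega>\<bar>} \<le> 3 * (t - s) ^ 2 / \<theta> ^ 4"
proof (cases "s = t")
  case True
  then show ?thesis using assms by simp
next
  case False
  then have "s < t" using assms by simp
  have "measure M {\<omega>\<in>space M. \<theta> < \<bar>Z t \<omega> - Z s \<omega>\<bar>} \<le> 3 * (t - s) ^ 2 / \<theta> ^ 4"
    by (rule normal_markov4[OF prob_space_axioms _ Zdist]) (use assms \<open>s < t\<close> in auto)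
  then show ?thesis .
qed

end

context gproc
begin

lemma chaining:
  assumes n: "0 < n" "n \<le> L" and lam: "0 < lam" and P: "finite P" "P \<subseteq> {0..n}"
  shows "measure M {\<omega>\<in>space M. \<exists>t\<in>P. lam < \<bar>Z t \<omega> - Z 0 \<omega>\<bar>} \<le> 13 * 36^4 * (n^2 + real (card P)) / lam^4"
proof -
  obtain K :: nat where K: "n < 2^K" using real_arch_pow[of 2 n] by auto
  define a :: "nat \<Rightarrow> real" where "a j = (1/36) * (9/10)^j" for j
  define f :: "real \<Rightarrow> nat \<Rightarrow> int" where "f t j = \<lfloor>t / n * 2^j\<rfloor>" for t j
  define g :: "real \<Rightarrow> nat \<Rightarrow> real" where "g t j = n * f t j / 2^j" for t j
  define E0 where "E0 = {\<omega>\<in>space M. lam/4 < \<bar>Z n \<omega> - Z 0 \<omega>\<bar>}"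
  define E1 where "E1 j k = {\<omega>\<in>space M. lam * a (Suc j) <
      \<bar>Z (n * (real k + 1) / 2^Suc j) \<omega> - Z (n * real k / 2^Suc j) \<omega>\<bar>}" for j k
  define ER where "ER t = {\<omega>\<in>space M. lam/4 < \<bar>Z t \<omega> - Z (g t K) \<omega>\<bar>}" for t
  define U where "U = E0 \<union> (\<Union>j\<in>{..<K}. \<Union>k\<in>{..<2^Suc j}. E1 j k) \<union> (\<Union>t\<in>P. ER t)"
  have fge: "0 \<le> f t j" if "t \<in> {0..n}" for t j
    using that n unfolding f_def by auto
  have fle: "f t j \<le> t / n * 2^j" if "t \<in> {0..n}" for t j
    unfolding f_def by linarith
  have fgt: "t / n * 2^j < f t j + 1" for t j
    unfolding f_def by linarith
  have gin: "0 \<le> g t j \<and> g t j \<le> t" if "t \<in> {0..n}" for t j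
  proof -
    have "real_of_int (f t j) \<le> t / n * 2^j" using fle[OF that] .
    then have "n * f t j \<le> t * 2^j" using n by (simp add: field_simps)
    then show ?thesis using fge[OF that, of j] n unfolding g_def by (auto simp: field_simps)
  qed
  have gK: "t - g t K \<le> 1" if "t \<in> {0..n}" for t
  proof -
    have "t / n * 2^K < f t K + 1" by (rule fgt)
    then have "t * 2^K < n * f t K + n" using n by (simp add: field_simps)
    moreover have "t - g t K = (t * 2^K - n * f t K) / 2^K" by (simp add: g_def field_simps)
    ultimately have "t - g t K < n / 2^K" by (simp add: divide_strict_right_mono)
    also have "n / 2^K < 1" using K by simp
    finally show ?thesis by simp
  qed
  have fsuc: "f t (Suc j) = 2 * f t j \<or> f t (Suc j) = 2 * f t j + 1" for t j
  proof -
    have "t / n * 2^Suc j = 2 * (t / n * 2^j)" by simp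
    then show ?thesis unfolding f_def using floor_double by metis
  qed
  have sa: "(\<Sum>j<K. a (Suc j)) \<le> 1/4"
  proof -
    have "(\<Sum>j<K. a (Suc j)) = (1/36) * (\<Sum>j<K. (9/10::real)^(Suc j))"
      unfolding a_def by (simp add: sum_distrib_left)
    also have "\<dots> = (1/36) * (9 - 9 * (9/10)^K)" by (simp only: geom_sum_9)
    also have "\<dots> \<le> 1/4" by simp
    finally show ?thesis .
  qed
  have apos: "0 < a j" for j unfolding a_def by simp
  have incl: "{\<omega>\<in>space M. \<exists>t\<in>P. lam < \<bar>Z t \<omega> - Z 0 \<omega>\<bar>} \<subseteq> U"
  proof (rule subsetI, rule ccontr)
    fix \<omega> assume w: "\<omega> \<in> {\<omega>\<in>space M. \<exists>t\<in>P. lam < \<bar>Z t \<omega> - Z 0 \<omega>\<bar>}" and nU: "\<omega> \<notin> U"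
    then obtain t where sp: "\<omega> \<in> space M" and tP: "t \<in> P" and big: "lam < \<bar>Z t \<omega> - Z 0 \<omega>\<bar>" by auto
    have t: "t \<in> {0..n}" using tP P by auto
    have h0: "\<bar>Z (g t 0) \<omega> - Z 0 \<omega>\<bar> \<le> lam/4"
    proof -
      have "t / n \<le> 1" using t n by simp
      then have "real_of_int (f t 0) \<le> 1" using fle[OF t, of 0] by simp
      then have "f t 0 \<le> 1" by simp
      then have "f t 0 = 0 \<or> f t 0 = 1" using fge[OF t, of 0] by auto
      then show ?thesis
      proof
        assume "f t 0 = 0" then show ?thesis using lam by (simp add: g_def)
      next
        assume "f t 0 = 1"
        then have "g t 0 = n" by (simp add: g_def)
        then show ?thesis using nU sp unfolding U_def E0_def by auto
      qed
    qed
    have hj: "\<bar>Z (g t (Suc j)) \<omega> - Z (g t j) \<omega>\<bar> \<le> lam * a (Suc j)" if j: "j < K" for j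
    proof (cases "f t (Suc j) = 2 * f t j")
      case True
      then have "g t (Suc j) = g t j" by (simp add: g_def)
      then show ?thesis using lam apos[of "Suc j"] by simp
    next
      case False
      then have fs: "f t (Suc j) = 2 * f t j + 1" using fsuc by metis
      define k where "k = nat (2 * f t j)"
      have kr: "real k = 2 * f t j" unfolding k_def using fge[OF t, of j] by simp
      have "real_of_int (f t (Suc j)) \<le> t / n * 2^Suc j" by (rule fle[OF t])
      also have "\<dots> \<le> 2^Suc j" using t n by (simp add: field_simps)
      finally have "real k + 1 \<le> 2^Suc j" using fs kr by simp
      then have "real (k + 1) \<le> real ((2::nat)^Suc j)" by simp
      then have "k + 1 \<le> 2^Suc j" by (simp only: of_nat_le_iff)
      then have "k < 2^Suc j" by simp
      then have "\<omega> \<notin> E1 j k" using nU j unfolding U_def by auto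
      moreover have "g t (Suc j) = n * (real k + 1) / 2^Suc j" using fs kr by (simp add: g_def)
      moreover have "g t j = n * real k / 2^Suc j" using kr by (simp add: g_def)
      ultimately show ?thesis using sp unfolding E1_def by auto
    qed
    have hR: "\<bar>Z t \<omega> - Z (g t K) \<omega>\<bar> \<le> lam/4" using nU sp tP unfolding U_def ER_def by auto
    have tele: "Z t \<omega> - Z 0 \<omega> = (Z t \<omega> - Z (g t K) \<omega>) + (\<Sum>j<K. Z (g t (Suc j)) \<omega> - Z (g t j) \<omega>) + (Z (g t 0) \<omega> - Z 0 \<omega>)"
    proof -
      have "(\<Sum>j<K. Z (g t (Suc j)) \<omega> - Z (g t j) \<omega>) = Z (g t K) \<omega> - Z (g t 0) \<omega>"
        by (rule sum_lessThan_telescope[where f="\<lambda>j. Z (g t j) \<omega>"])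
      then show ?thesis by simp
    qed
    have "\<bar>\<Sum>j<K. Z (g t (Suc j)) \<omega> - Z (g t j) \<omega>\<bar> \<le> (\<Sum>j<K. lam * a (Suc j))"
      by (rule order.trans[OF sum_abs]) (intro sum_mono hj, simp)
    also have "\<dots> = lam * (\<Sum>j<K. a (Suc j))" by (simp add: sum_distrib_left)
    also have "\<dots> \<le> lam * (1/4)" using sa lam by (intro mult_left_mono) auto
    finally have hs: "\<bar>\<Sum>j<K. Z (g t (Suc j)) \<omega> - Z (g t j) \<omega>\<bar> \<le> lam/4" by simp
    have "\<bar>Z t \<omega> - Z 0 \<omega>\<bar> \<le> lam/4 + lam/4 + lam/4"
      unfolding tele using h0 hR hs by linarith
    then show False using big lam by linarith
  qed
  have E0s: "E0 \<in> sets M" unfolding E0_def using n by (intro incr_sets) auto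
  have pts: "0 \<le> n * real k / 2^Suc j \<and> n * real k / 2^Suc j \<le> n" if "k < 2^Suc j" for j k
  proof -
    have "real k < real ((2::nat)^Suc j)" using that by (simp only: of_nat_less_iff)
    then have "real k \<le> 2^Suc j" by simp
    then show ?thesis using n by (auto simp: field_simps)
  qed
  have pts1: "0 \<le> n * (real k + 1) / 2^Suc j \<and> n * (real k + 1) / 2^Suc j \<le> n" if "k < 2^Suc j" for j k
  proof -
    have "k + 1 \<le> 2^Suc j" using that by simp
    then have "real (k + 1) \<le> real ((2::nat)^Suc j)" by (simp only: of_nat_le_iff)
    then have "real k + 1 \<le> 2^Suc j" by simp
    then have "n * (real k + 1) \<le> n * 2^Suc j" using n by (intro mult_left_mono) auto
    then show ?thesis using n by (auto simp: divide_le_eq)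
  qed
  have E1s: "E1 j k \<in> sets M" if "k < 2^Suc j" for j k
    unfolding E1_def using pts[OF that] pts1[OF that] n by (intro incr_sets) auto
  have ERs: "ER t \<in> sets M" if "t \<in> P" for t
    unfolding ER_def using gin[of t K] that P n by (intro incr_sets) auto
  have m0: "measure M E0 \<le> 768 * n^2 / lam^4"
  proof -
    have "measure M E0 \<le> 3 * (n - 0)^2 / (lam/4)^4" unfolding E0_def
      using n lam by (intro incr_bound) auto
    then show ?thesis by (simp add: field_simps)
  qed
  have m1: "measure M (E1 j k) \<le> 3 * 36^4 * n^2 / lam^4 * (10000/26244)^(Suc j)"
    if "k < 2^Suc j" for j k
  proof -
    have "measure M (E1 j k) \<le> 3 * (n * (real k + 1) / 2^Suc j - n * real k / 2^Suc j)^2 / (lam * a (Suc j))^4"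
    proof -
      have le: "n*real k/2^Suc j \<le> n*(real k+1)/2^Suc j" using n by (intro divide_right_mono mult_left_mono) auto
      show ?thesis unfolding E1_def
        by (intro incr_bound; use pts[OF that] pts1[OF that] n lam apos[of "Suc j"] le in auto)
    qed
    also have "\<dots> = 3 * (n / 2^Suc j)^2 / (lam * ((1/36) * (9/10)^Suc j))^4"
      unfolding a_def by (simp add: diff_divide_distrib[symmetric] algebra_simps)
    also have "\<dots> = 3 * 36^4 * n^2 / lam^4 * (10000/26244)^(Suc j)" by (rule arith1[OF lam])
    finally show ?thesis .
  qed
  have mR: "measure M (ER t) \<le> 768 / lam^4" if "t \<in> P" for t
  proof -
    have t: "t \<in> {0..n}" using that P by auto
    have "measure M (ER t) \<le> 3 * (t - g t K)^2 / (lam/4)^4" unfolding ER_def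
      using gin[OF t, of K] t n lam by (intro incr_bound) auto
    also have "\<dots> \<le> 3 * 1 / (lam/4)^4"
      using gin[OF t, of K] gK[OF t] lam by (intro divide_right_mono mult_left_mono) (auto simp: power_le_one)
    finally show ?thesis by (simp add: field_simps)
  qed
  have s1: "(\<Union>j\<in>{..<K}. \<Union>k\<in>{..<2^Suc j}. E1 j k) \<in> sets M" using E1s by auto
  have s2: "(\<Union>t\<in>P. ER t) \<in> sets M" using ERs P by auto
  have "measure M U \<le> measure M E0 + measure M (\<Union>j\<in>{..<K}. \<Union>k\<in>{..<2^Suc j}. E1 j k) + measure M (\<Union>t\<in>P. ER t)"
  proof -
    show ?thesis unfolding U_def
      using measure_Un_le[OF sets.Un[OF E0s s1] s2] measure_Un_le[OF E0s s1] by linarith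
  qed
  also have "measure M (\<Union>j\<in>{..<K}. \<Union>k\<in>{..<2^Suc j}. E1 j k) \<le> 12 * 36^4 * n^2 / lam^4"
  proof -
    have "measure M (\<Union>j\<in>{..<K}. \<Union>k\<in>{..<2^Suc j}. E1 j k) \<le> (\<Sum>j<K. measure M (\<Union>k\<in>{..<2^Suc j}. E1 j k))"
      using E1s by (intro measure_UNION_le) auto
    also have "\<dots> \<le> (\<Sum>j<K. 3 * 36^4 * n^2 / lam^4 * (10000/13122)^(Suc j))"
    proof (intro sum_mono)
      fix j assume "j \<in> {..<K}"
      have "measure M (\<Union>k\<in>{..<2^Suc j}. E1 j k) \<le> (\<Sum>k<2^Suc j. measure M (E1 j k))"
        using E1s by (intro measure_UNION_le) auto
      also have "\<dots> \<le> (\<Sum>k<(2::nat)^Suc j. 3 * 36^4 * n^2 / lam^4 * (10000/26244)^(Suc j))"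
        by (intro sum_mono m1) auto
      also have "\<dots> = 3 * 36^4 * n^2 / lam^4 * ((10000/26244)^(Suc j) * 2^Suc j)"
        by simp
      also have "(10000/26244::real)^(Suc j) * 2^Suc j = (10000/13122)^(Suc j)"
        by (simp flip: power_mult_distrib)
      finally show "measure M (\<Union>k\<in>{..<2^Suc j}. E1 j k) \<le> 3 * 36^4 * n^2 / lam^4 * (10000/13122)^(Suc j)" .
    qed
    also have "\<dots> = 3 * 36^4 * n^2 / lam^4 * (\<Sum>j<K. (10000/13122::real)^(Suc j))"
      by (simp add: sum_distrib_left)
    also have "\<dots> \<le> 3 * 36^4 * n^2 / lam^4 * 4"
    proof (intro mult_left_mono)
      have "(\<Sum>j<K. (10000/13122::real)^(Suc j)) \<le> (10000/13122) / (1 - 10000/13122)"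
        by (rule geom_sum_le) auto
      then show "(\<Sum>j<K. (10000/13122::real)^(Suc j)) \<le> 4" by simp
    qed (use lam in auto)
    finally show ?thesis by simp
  qed
  also have "measure M (\<Union>t\<in>P. ER t) \<le> real (card P) * (768 / lam^4)"
  proof -
    have "measure M (\<Union>t\<in>P. ER t) \<le> (\<Sum>t\<in>P. measure M (ER t))"
      using ERs P by (intro measure_UNION_le) auto
    also have "\<dots> \<le> (\<Sum>t\<in>P. 768 / lam^4)" by (intro sum_mono mR)
    finally show ?thesis by simp
  qed
  finally have mU: "measure M U \<le> 768 * n^2 / lam^4 + 12 * 36^4 * n^2 / lam^4 + real (card P) * (768 / lam^4)"
    using m0 by linarith
  also have "\<dots> \<le> 13 * 36^4 * (n^2 + real (card P)) / lam^4"
    using lam by (simp add: field_simps)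
  finally have "measure M U \<le> 13 * 36^4 * (n^2 + real (card P)) / lam^4" .
  moreover have "U \<in> sets M" unfolding U_def using E0s s1 s2 by auto
  ultimately show ?thesis using incl by (meson finite_measure_mono order.trans)
qed

end

definition tightP :: "'a measure \<Rightarrow> (nat \<Rightarrow> 'a \<Rightarrow> real) \<Rightarrow> bool" where
  "tightP M N \<longleftrightarrow> (\<forall>\<epsilon>>0. \<exists>C T0. \<forall>T\<ge>T0. \<exists>A\<in>sets M. {\<omega>\<in>space M. C < N T \<omega>} \<subseteq> A \<and> measure M A < \<epsilon>)"

lemma tightP_mono:
  assumes "tightP M N'" "\<forall>\<^sub>F T in sequentially. \<forall>\<omega>\<in>space M. N T \<omega> \<le> N' T \<omega>"
  shows "tightP M N"
  unfolding tightP_def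
proof (intro allI impI)
  fix \<epsilon> :: real assume e: "\<epsilon> > 0"
  obtain C T0 where C: "\<forall>T\<ge>T0. \<exists>A\<in>sets M. {\<omega>\<in>space M. C < N' T \<omega>} \<subseteq> A \<and> measure M A < \<epsilon>"
    using assms(1) e unfolding tightP_def by blast
  obtain T1 where T1: "\<forall>T\<ge>T1. \<forall>\<omega>\<in>space M. N T \<omega> \<le> N' T \<omega>"
    using assms(2) unfolding eventually_sequentially by blast
  show "\<exists>C T0. \<forall>T\<ge>T0. \<exists>A\<in>sets M. {\<omega> \<in> space M. C < N T \<omega>} \<subseteq> A \<and> measure M A < \<epsilon>"
  proof (intro exI allI impI)
    fix T assume "max T0 T1 \<le> T"
    then obtain A where "A \<in> sets M" "{\<omega>\<in>space M. C < N' T \<omega>} \<subseteq> A" "measure M A < \<epsilon>" using C by auto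
    moreover have "{\<omega>\<in>space M. C < N T \<omega>} \<subseteq> {\<omega>\<in>space M. C < N' T \<omega>}"
      using T1 \<open>max T0 T1 \<le> T\<close> by force
    ultimately show "\<exists>A\<in>sets M. {\<omega> \<in> space M. C < N T \<omega>} \<subseteq> A \<and> measure M A < \<epsilon>" by blast
  qed
qed

lemma tightP_add:
  assumes "tightP M N1" "tightP M N2"
  shows "tightP M (\<lambda>T \<omega>. N1 T \<omega> + N2 T \<omega>)"
  unfolding tightP_def
proof (intro allI impI)
  fix \<epsilon> :: real assume e: "\<epsilon> > 0"
  obtain C1 T1 where C1: "\<forall>T\<ge>T1. \<exists>A\<in>sets M. {\<omega>\<in>space M. C1 < N1 T \<omega>} \<subseteq> A \<and> measure M A < \<epsilon>/2"
    using assms(1) e unfolding tightP_def by (meson half_gt_zero)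
  obtain C2 T2 where C2: "\<forall>T\<ge>T2. \<exists>A\<in>sets M. {\<omega>\<in>space M. C2 < N2 T \<omega>} \<subseteq> A \<and> measure M A < \<epsilon>/2"
    using assms(2) e unfolding tightP_def by (meson half_gt_zero)
  show "\<exists>C T0. \<forall>T\<ge>T0. \<exists>A\<in>sets M. {\<omega> \<in> space M. C < N1 T \<omega> + N2 T \<omega>} \<subseteq> A \<and> measure M A < \<epsilon>"
  proof (intro exI allI impI)
    fix T assume T: "max T1 T2 \<le> T"
    obtain A1 where A1: "A1 \<in> sets M" "{\<omega>\<in>space M. C1 < N1 T \<omega>} \<subseteq> A1" "measure M A1 < \<epsilon>/2" using C1 T by auto
    obtain A2 where A2: "A2 \<in> sets M" "{\<omega>\<in>space M. C2 < N2 T \<omega>} \<subseteq> A2" "measure M A2 < \<epsilon>/2" using C2 T by auto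
    have "{\<omega>\<in>space M. C1 + C2 < N1 T \<omega> + N2 T \<omega>} \<subseteq> A1 \<union> A2"
    proof
      fix \<omega> assume w: "\<omega> \<in> {\<omega>\<in>space M. C1 + C2 < N1 T \<omega> + N2 T \<omega>}"
      then have "C1 < N1 T \<omega> \<or> C2 < N2 T \<omega>" by auto
      then show "\<omega> \<in> A1 \<union> A2" using A1(2) A2(2) w by blast
    qed
    moreover have "measure M (A1 \<union> A2) < \<epsilon>" using measure_Un_le[OF A1(1) A2(1)] A1 A2 by linarith
    ultimately show "\<exists>A\<in>sets M. {\<omega> \<in> space M. C1 + C2 < N1 T \<omega> + N2 T \<omega>} \<subseteq> A \<and> measure M A < \<epsilon>"
      using A1 A2 by blast
  qed
qed

lemma tightP_cmult:
  assumes "tightP M N" "0 \<le> c"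
  shows "tightP M (\<lambda>T \<omega>. c * N T \<omega>)"
proof (cases "c = 0")
  case True
  show ?thesis unfolding tightP_def True
    by (intro allI impI exI[of _ 0] exI[of _ 0]) (auto intro!: bexI[of _ "{}"])
next
  case False
  then have c: "c > 0" using assms by simp
  show ?thesis unfolding tightP_def
  proof (intro allI impI)
    fix \<epsilon> :: real assume e: "\<epsilon> > 0"
    obtain C T0 where C: "\<forall>T\<ge>T0. \<exists>A\<in>sets M. {\<omega>\<in>space M. C < N T \<omega>} \<subseteq> A \<and> measure M A < \<epsilon>"
      using assms(1) e unfolding tightP_def by blast
    show "\<exists>C T0. \<forall>T\<ge>T0. \<exists>A\<in>sets M. {\<omega> \<in> space M. C < c * N T \<omega>} \<subseteq> A \<and> measure M A < \<epsilon>"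
    proof (intro exI[of _ "c * C"] exI[of _ T0] allI impI)
      fix T assume "T0 \<le> T"
      then obtain A where A: "A \<in> sets M" "{\<omega>\<in>space M. C < N T \<omega>} \<subseteq> A" "measure M A < \<epsilon>" using C by auto
      have "{\<omega>\<in>space M. c * C < c * N T \<omega>} \<subseteq> A" using A c by auto
      then show "\<exists>A\<in>sets M. {\<omega> \<in> space M. c * C < c * N T \<omega>} \<subseteq> A \<and> measure M A < \<epsilon>" using A by blast
    qed
  qed
qed

lemma tightP_from_bound:
  assumes "\<And>lam. lam > 0 \<Longrightarrow> \<forall>\<^sub>F T in sequentially. \<exists>A\<in>sets M. {\<omega>\<in>space M. lam < N T \<omega>} \<subseteq> A \<and> measure M A \<le> K / lam^4"
  shows "tightP M N"
  unfolding tightP_def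
proof (intro allI impI)
  fix \<epsilon> :: real assume e: "\<epsilon> > 0"
  define lam where "lam = (\<bar>K\<bar> + 1) / \<epsilon> + 1"
  have l1: "lam \<ge> 1" unfolding lam_def using e by auto
  have "\<epsilon> * lam = \<bar>K\<bar> + 1 + \<epsilon>" unfolding lam_def using e by (simp add: field_simps)
  then have l2: "\<bar>K\<bar> < \<epsilon> * lam" using e by linarith
  have "lam^1 \<le> lam^4" using l1 by (intro power_increasing) auto
  then have "lam \<le> lam^4" by simp
  have "K / lam^4 \<le> \<bar>K\<bar> / lam^4" by (intro divide_right_mono) auto
  also have "\<dots> \<le> \<bar>K\<bar> / lam" using l1 \<open>lam \<le> lam^4\<close> by (intro divide_left_mono) auto
  also have "\<dots> < \<epsilon>"
  proof -
    have "\<bar>K\<bar> < \<epsilon> * lam" by (rule l2)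
    then show ?thesis using l1 by (subst pos_divide_less_eq) (auto simp: mult.commute)
  qed
  finally have lt: "K / lam^4 < \<epsilon>" .
  obtain T0 where T0: "\<forall>T\<ge>T0. \<exists>A\<in>sets M. {\<omega>\<in>space M. lam < N T \<omega>} \<subseteq> A \<and> measure M A \<le> K / lam^4"
    using assms[of lam] l1 unfolding eventually_sequentially by auto
  show "\<exists>C T0. \<forall>T\<ge>T0. \<exists>A\<in>sets M. {\<omega> \<in> space M. C < N T \<omega>} \<subseteq> A \<and> measure M A < \<epsilon>"
  proof (intro exI[of _ lam] exI[of _ T0] allI impI)
    fix T assume "T0 \<le> T"
    then obtain A where A: "A\<in>sets M" "{\<omega>\<in>space M. lam < N T \<omega>} \<subseteq> A" "measure M A \<le> K / lam^4" using T0 by blast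
    have "measure M A < \<epsilon>" using A(3) lt by linarith
    then show "\<exists>A\<in>sets M. {\<omega> \<in> space M. lam < N T \<omega>} \<subseteq> A \<and> measure M A < \<epsilon>" using A(1,2) by blast
  qed
qed

lemma wiener_gproc:
  assumes "prob_space M" "std_wiener_on M L W"
  shows "gproc M W L"
  using assms unfolding std_wiener_on_def gproc_def gproc_axioms_def by auto

lemma wiener_max:
  assumes M: "prob_space M" and W: "std_wiener_on M L W"
    and n: "0 < n" "n \<le> L" and lam: "0 < lam" and P: "finite P" "P \<subseteq> {0..n}"
  shows "\<exists>A\<in>sets M. {\<omega>\<in>space M. \<exists>t\<in>P. lam < \<bar>W t \<omega>\<bar>} \<subseteq> A \<and>
           measure M A \<le> 13 * 36^4 * (n^2 + real (card P)) / lam^4"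
proof -
  interpret gproc M W L by (rule wiener_gproc[OF M W])
  have h: "AE \<omega> in M. W 0 \<omega> = 0 \<and> continuous_on {0..L} (\<lambda>x. W x \<omega>)" using W unfolding std_wiener_on_def by blast
  have "AE \<omega> in M. W 0 \<omega> = 0" by (rule eventually_mono[OF h]) simp
  then obtain N where N: "{\<omega>\<in>space M. \<not> W 0 \<omega> = 0} \<subseteq> N" "emeasure M N = 0" "N \<in> sets M"
    by (rule AE_E)
  define B where "B = {\<omega>\<in>space M. \<exists>t\<in>P. lam < \<bar>W t \<omega> - W 0 \<omega>\<bar>}"
  have Bs: "B \<in> sets M"
  proof -
    have "B = (\<Union>t\<in>P. {\<omega>\<in>space M. lam < \<bar>W t \<omega> - W 0 \<omega>\<bar>})" unfolding B_def by auto
    also have "\<dots> \<in> sets M" using P n by (intro sets.finite_UN incr_sets) auto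
    finally show ?thesis .
  qed
  have mB: "measure M B \<le> 13 * 36^4 * (n^2 + real (card P)) / lam^4"
    unfolding B_def by (rule chaining[OF n lam P])
  have mN: "measure M N = 0" using N by (simp add: measure_def)
  have "{\<omega>\<in>space M. \<exists>t\<in>P. lam < \<bar>W t \<omega>\<bar>} \<subseteq> B \<union> N"
  proof
    fix \<omega> assume w: "\<omega> \<in> {\<omega>\<in>space M. \<exists>t\<in>P. lam < \<bar>W t \<omega>\<bar>}"
    show "\<omega> \<in> B \<union> N"
    proof (cases "W 0 \<omega> = 0")
      case True then show ?thesis using w unfolding B_def by auto
    next
      case False then show ?thesis using w N(1) by auto
    qed
  qed
  moreover have "measure M (B \<union> N) \<le> 13 * 36^4 * (n^2 + real (card P)) / lam^4"
    using measure_Un_le[OF Bs N(3)] mB mN by linarith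
  ultimately show ?thesis using Bs N(3) by blast
qed

definition PT :: "nat \<Rightarrow> real set" where "PT T = insert (real T / 2) (real ` {..T div 2})"

definition wmaxF :: "(nat \<Rightarrow> real \<Rightarrow> 'a \<Rightarrow> real) \<Rightarrow> nat \<Rightarrow> 'a \<Rightarrow> real" where
  "wmaxF W T \<omega> = Max (insert 0 ((\<lambda>t. \<bar>W T t \<omega>\<bar>) ` PT T))"

lemma PT_finite: "finite (PT T)" unfolding PT_def by auto

lemma PT_sub: "PT T \<subseteq> {0..real T / 2}"
proof -
  have "real k \<le> real T / 2" if "k \<le> T div 2" for k
  proof -
    have "real k \<le> real (T div 2)" using that by simp
    also have "real (T div 2) \<le> real T / 2" by linarith
    finally show ?thesis .
  qed
  then show ?thesis unfolding PT_def by auto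
qed

lemma PT_card: "real (card (PT T)) \<le> real T / 2 + 2"
proof -
  have "card (PT T) \<le> Suc (card (real ` {..T div 2}))" unfolding PT_def by (simp add: card_insert_if)
  also have "card (real ` {..T div 2}) \<le> card {..T div 2}" by (rule card_image_le) auto
  finally have "card (PT T) \<le> T div 2 + 2" by simp
  then have "real (card (PT T)) \<le> real (T div 2) + 2" by linarith
  also have "real (T div 2) \<le> real T / 2" by linarith
  finally show ?thesis by simp
qed

lemma wmaxF_ge: "t \<in> PT T \<Longrightarrow> \<bar>W T t \<omega>\<bar> \<le> wmaxF W T \<omega>"
  unfolding wmaxF_def by (rule Max_ge) (auto simp: PT_finite)

lemma wmaxF_nonneg: "0 \<le> wmaxF W T \<omega>"
  unfolding wmaxF_def by (rule Max_ge) (auto simp: PT_finite)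

lemma wmax_tight:
  assumes M: "prob_space M" and W: "\<And>T. std_wiener_on M (real T / 2) (W T)"
  shows "tightP M (\<lambda>T \<omega>. wmaxF W T \<omega> / sqrt (real T))"
proof (rule tightP_from_bound[where K = "13 * 36^4"])
  fix lam :: real assume lam: "lam > 0"
  show "\<forall>\<^sub>F T in sequentially. \<exists>A\<in>sets M. {\<omega>\<in>space M. lam < wmaxF W T \<omega> / sqrt (real T)} \<subseteq> A \<and>
          measure M A \<le> 13 * 36^4 / lam^4"
    unfolding eventually_sequentially
  proof (intro exI[of _ 2] allI impI)
    fix T :: nat assume T: "2 \<le> T"
    have sT: "sqrt (real T) > 0" using T by simp
    have l': "lam * sqrt (real T) > 0" using lam sT by simp
    obtain A where A: "A \<in> sets M" "{\<omega>\<in>space M. \<exists>t\<in>PT T. lam * sqrt (real T) < \<bar>W T t \<omega>\<bar>} \<subseteq> A"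
      "measure M A \<le> 13 * 36^4 * ((real T / 2)^2 + real (card (PT T))) / (lam * sqrt (real T))^4"
      using wiener_max[OF M W[of T], where n="real T / 2" and lam="lam * sqrt (real T)" and P="PT T"] T l' PT_finite PT_sub by auto
    have "{\<omega>\<in>space M. lam < wmaxF W T \<omega> / sqrt (real T)} \<subseteq> {\<omega>\<in>space M. \<exists>t\<in>PT T. lam * sqrt (real T) < \<bar>W T t \<omega>\<bar>}"
    proof safe
      fix \<omega> assume "\<omega> \<in> space M" "lam < wmaxF W T \<omega> / sqrt (real T)"
      then have "lam * sqrt (real T) < wmaxF W T \<omega>" using sT by (simp add: field_simps)
      then obtain x where "x \<in> insert 0 ((\<lambda>t. \<bar>W T t \<omega>\<bar>) ` PT T)" "lam * sqrt (real T) < x"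
        unfolding wmaxF_def by (subst (asm) Max_gr_iff) (auto simp: PT_finite)
      then show "\<exists>t\<in>PT T. lam * sqrt (real T) < \<bar>W T t \<omega>\<bar>" using l' by auto
    qed
    moreover have "measure M A \<le> 13 * 36^4 / lam^4"
    proof -
      have T2: "real T \<ge> 2" using T by simp
      have "0 \<le> (real T - 2) * (3 * real T + 4)" using T2 by (intro mult_nonneg_nonneg) auto
      then have h: "0 \<le> 3*(real T)^2 - 2*real T - 8" by (simp add: algebra_simps power2_eq_square)
      have "(real T / 2)^2 = (real T)^2 / 4" by (simp add: power_divide)
      then have le: "(real T / 2)^2 + real (card (PT T)) \<le> (real T)^2"
        using PT_card[of T] h by linarith
      have eq: "(lam * sqrt (real T))^4 = lam^4 * (real T)^2"
      proof -
        have "sqrt (real T)^4 = (sqrt (real T) * sqrt (real T)) * (sqrt (real T) * sqrt (real T))"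
          by (simp add: power4_eq_xxxx mult.assoc)
        also have "\<dots> = (real T)^2" by (simp add: power2_eq_square)
        finally show ?thesis by (simp add: power_mult_distrib)
      qed
      have "13 * 36^4 * ((real T / 2)^2 + real (card (PT T))) / (lam * sqrt (real T))^4
            \<le> 13 * 36^4 * (real T)^2 / (lam^4 * (real T)^2)"
        unfolding eq by (intro divide_right_mono mult_left_mono le) (use lam T in auto)
      also have "\<dots> = 13 * 36^4 / lam^4" using T by simp
      finally show ?thesis using A(3) by linarith
    qed
    ultimately show "\<exists>A\<in>sets M. {\<omega>\<in>space M. lam < wmaxF W T \<omega> / sqrt (real T)} \<subseteq> A \<and> measure M A \<le> 13 * 36^4 / lam^4"
      using A by blast
  qed
qed


definition HS :: "(nat \<Rightarrow> nat) \<Rightarrow> nat \<Rightarrow> nat set" where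
  "HS m T = {u. m T \<le> u \<and> real u \<le> real T / 2}"

definition hrF :: "(nat \<Rightarrow> real \<Rightarrow> 'a \<Rightarrow> real) \<Rightarrow> (nat \<Rightarrow> nat) \<Rightarrow> nat \<Rightarrow> 'a \<Rightarrow> real" where
  "hrF W m T \<omega> = sqrt (real (m T)) * Max (insert 0 ((\<lambda>u. \<bar>W T (real u) \<omega>\<bar> / real u) ` HS m T))"

lemma HS_finite: "finite (HS m T)"
proof -
  have "HS m T \<subseteq> {..T}" unfolding HS_def by auto
  then show ?thesis by (rule finite_subset) auto
qed

lemma hrF_ge: "u \<in> HS m T \<Longrightarrow> sqrt (real (m T)) * (\<bar>W T (real u) \<omega>\<bar> / real u) \<le> hrF W m T \<omega>"
  unfolding hrF_def by (intro mult_left_mono Max_ge) (auto simp: HS_finite)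

lemma hrF_nonneg: "0 \<le> hrF W m T \<omega>"
  unfolding hrF_def by (intro mult_nonneg_nonneg Max_ge) (auto simp: HS_finite)

lemma block_arith:
  fixes lam mm :: real assumes "lam > 0" "mm > 0"
  shows "13 * 36^4 * (3 * (2^Suc j * mm)^2) / (lam * 2^j * sqrt mm)^4 = 13 * 36^4 * 12 / lam^4 * (1/4)^j"
proof -
  have s4: "sqrt mm ^ 4 = mm^2"
  proof -
    have "sqrt mm^4 = (sqrt mm * sqrt mm) * (sqrt mm * sqrt mm)" by (simp add: power4_eq_xxxx mult.assoc)
    also have "\<dots> = mm^2" using assms by (simp add: power2_eq_square)
    finally show ?thesis .
  qed
  have p1: "((2::real)^j)^4 = 4^j * 4^j"
    by (simp add: power4_eq_xxxx flip: power_mult_distrib)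
  have p2: "((2::real)^Suc j)^2 = 4 * 4^j"
    by (simp add: power2_eq_square flip: power_mult_distrib)
  have p3: "((2::real)^j)^2 = 4^j"
    by (simp add: power2_eq_square flip: power_mult_distrib)
  have "(lam * 2^j * sqrt mm)^4 = lam^4 * (4^j * 4^j) * mm^2" by (simp add: power_mult_distrib s4 p1)
  moreover have "(2^Suc j * mm)^2 = 4 * 4^j * mm^2" by (simp add: power_mult_distrib p2 p3)
  ultimately show ?thesis using assms by (simp add: field_simps power_one_over)
qed

lemma hr_tight:
  assumes M: "prob_space M" and W: "\<And>T. std_wiener_on M (real T / 2) (W T)"
    and m: "\<forall>\<^sub>F T in sequentially. 1 \<le> m T"
  shows "tightP M (hrF W m)"
proof (rule tightP_from_bound[where K = "13 * 36^4 * 16"])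
  fix lam :: real assume lam: "lam > 0"
  obtain T1 where T1: "\<And>T. T \<ge> T1 \<Longrightarrow> 1 \<le> m T" using m unfolding eventually_sequentially by auto
  show "\<forall>\<^sub>F T in sequentially. \<exists>A\<in>sets M. {\<omega>\<in>space M. lam < hrF W m T \<omega>} \<subseteq> A \<and>
          measure M A \<le> 13 * 36^4 * 16 / lam^4"
    unfolding eventually_sequentially
  proof (intro exI[of _ "max T1 1"] allI impI)
    fix T :: nat assume T: "max T1 1 \<le> T"
    have mT: "1 \<le> m T" using T1 T by auto
    define mm where "mm = real (m T)"
    have mm1: "mm \<ge> 1" using mT unfolding mm_def by simp
    have smm: "sqrt mm > 0" using mm1 by simp
    define nj where "nj j = min (2^Suc j * mm) (real T / 2)" for j :: nat
    define Pj where "Pj j = real ` {u. 2^j * m T \<le> u \<and> real u \<le> nj j}" for j :: nat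
    define lj where "lj j = lam * 2^j * sqrt mm" for j :: nat
    have T1': "real T \<ge> 1" using T by simp
    have nj0: "0 < nj j" for j using mm1 T1' unfolding nj_def by (auto intro!: mult_pos_pos)
    have njL: "nj j \<le> real T / 2" for j unfolding nj_def by simp
    have Pfin: "finite (Pj j)" for j
    proof -
      have "{u. 2^j * m T \<le> u \<and> real u \<le> nj j} \<subseteq> {..2^Suc j * m T}"
      proof
        fix u assume "u \<in> {u. 2^j * m T \<le> u \<and> real u \<le> nj j}"
        then have "real u \<le> 2^Suc j * mm" unfolding nj_def by auto
        then have "real u \<le> real (2^Suc j * m T)" unfolding mm_def by simp
        then show "u \<in> {..2^Suc j * m T}" by (simp only: of_nat_le_iff) simp
      qed
      then show ?thesis unfolding Pj_def by (intro finite_imageI) (rule finite_subset, auto)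
    qed
    have Pcard: "real (card (Pj j)) \<le> 2^Suc j * mm + 1" for j
    proof -
      have sub: "{u. 2^j * m T \<le> u \<and> real u \<le> nj j} \<subseteq> {..2^Suc j * m T}"
      proof
        fix u assume "u \<in> {u. 2^j * m T \<le> u \<and> real u \<le> nj j}"
        then have "real u \<le> 2^Suc j * mm" unfolding nj_def by auto
        then have "real u \<le> real (2^Suc j * m T)" unfolding mm_def by simp
        then show "u \<in> {..2^Suc j * m T}" by (simp only: of_nat_le_iff) simp
      qed
      have "card (Pj j) \<le> card {u. 2^j * m T \<le> u \<and> real u \<le> nj j}" unfolding Pj_def by (rule card_image_le) (rule finite_subset[OF sub], auto)
      also have "\<dots> \<le> card {..2^Suc j * m T}" by (rule card_mono[OF _ sub]) auto
      finally have "card (Pj j) \<le> 2^Suc j * m T + 1" by simp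
      then have "real (card (Pj j)) \<le> real (2^Suc j * m T + 1)" by (simp only: of_nat_le_iff)
      then show ?thesis unfolding mm_def by simp
    qed
    have Psub: "Pj j \<subseteq> {0..nj j}" for j unfolding Pj_def by auto
    have lj0: "0 < lj j" for j unfolding lj_def using lam smm by simp
    have "\<forall>j. \<exists>B. B \<in> sets M \<and> {\<omega>\<in>space M. \<exists>t\<in>Pj j. lj j < \<bar>W T t \<omega>\<bar>} \<subseteq> B \<and>
            measure M B \<le> 13 * 36^4 * ((nj j)^2 + real (card (Pj j))) / (lj j)^4"
    proof
      fix j
      obtain B where "B\<in>sets M" "{\<omega>\<in>space M. \<exists>t\<in>Pj j. lj j < \<bar>W T t \<omega>\<bar>} \<subseteq> B"
          "measure M B \<le> 13 * 36^4 * ((nj j)^2 + real (card (Pj j))) / (lj j)^4"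
        using wiener_max[OF M W[of T] nj0[of j] njL[of j] lj0[of j] Pfin[of j] Psub[of j]] by (elim bexE conjE)
      then show "\<exists>B. B \<in> sets M \<and> {\<omega>\<in>space M. \<exists>t\<in>Pj j. lj j < \<bar>W T t \<omega>\<bar>} \<subseteq> B \<and>
            measure M B \<le> 13 * 36^4 * ((nj j)^2 + real (card (Pj j))) / (lj j)^4" by (intro exI[of _ B] conjI)
    qed
    from choice[OF this] obtain B where BB: "\<forall>j. B j \<in> sets M \<and> {\<omega>\<in>space M. \<exists>t\<in>Pj j. lj j < \<bar>W T t \<omega>\<bar>} \<subseteq> B j \<and>
            measure M (B j) \<le> 13 * 36^4 * ((nj j)^2 + real (card (Pj j))) / (lj j)^4" by blast
    have B: "\<And>j. B j \<in> sets M"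
      "\<And>j. {\<omega>\<in>space M. \<exists>t\<in>Pj j. lj j < \<bar>W T t \<omega>\<bar>} \<subseteq> B j"
      "\<And>j. measure M (B j) \<le> 13 * 36^4 * ((nj j)^2 + real (card (Pj j))) / (lj j)^4"
      using BB by blast+
    have Bb: "measure M (B j) \<le> 13 * 36^4 * 12 / lam^4 * (1/4)^j" if j: "j \<in> {..<T}" for j
    proof -
      have p: "(1::real) \<le> 2^Suc j" by (rule one_le_power) simp
      have "(1::real) * 1 \<le> 2^Suc j * mm" using mm1 p by (intro mult_mono) auto
      then have x1: "1 \<le> 2^Suc j * mm" by simp
      have "(nj j)^2 \<le> (2^Suc j * mm)^2" unfolding nj_def using nj0[of j] by (intro power_mono) (auto simp: nj_def)
      then have "(nj j)^2 + real (card (Pj j)) \<le> (2^Suc j * mm)^2 + 2^Suc j * mm + 1" using Pcard[of j] by linarith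
      also have "\<dots> \<le> 3 * (2^Suc j * mm)^2"
      proof -
        define x where "x = 2^Suc j * mm"
        have x1': "1 \<le> x" using x1 unfolding x_def .
        have "0 \<le> x * (x - 1)" using x1' by (intro mult_nonneg_nonneg) auto
        then have "x \<le> x^2" by (simp add: power2_eq_square algebra_simps)
        moreover have "1 \<le> x^2" using x1' by (simp add: one_le_power)
        ultimately show ?thesis unfolding x_def[symmetric] by linarith
      qed
      finally have le: "(nj j)^2 + real (card (Pj j)) \<le> 3 * (2^Suc j * mm)^2" .
      have "measure M (B j) \<le> 13 * 36^4 * ((nj j)^2 + real (card (Pj j))) / (lj j)^4" using B(3)[of j] .
      also have "\<dots> \<le> 13 * 36^4 * (3 * (2^Suc j * mm)^2) / (lj j)^4"
        using lj0[of j] by (intro divide_right_mono mult_left_mono le) auto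
      also have "\<dots> = 13 * 36^4 * 12 / lam^4 * (1/4)^j" unfolding lj_def
        by (rule block_arith[OF lam]) (use mm1 in simp)
      finally show ?thesis .
    qed
    have incl: "{\<omega>\<in>space M. lam < hrF W m T \<omega>} \<subseteq> (\<Union>j\<in>{..<T}. B j)"
    proof
      fix \<omega> assume w: "\<omega> \<in> {\<omega>\<in>space M. lam < hrF W m T \<omega>}"
      then have sp: "\<omega> \<in> space M" by auto
      have "lam / sqrt mm < Max (insert 0 ((\<lambda>u. \<bar>W T (real u) \<omega>\<bar> / real u) ` HS m T))"
        using w smm unfolding hrF_def mm_def[symmetric] by (simp add: divide_less_eq mult.commute)
      then obtain x where x: "x \<in> insert 0 ((\<lambda>u. \<bar>W T (real u) \<omega>\<bar> / real u) ` HS m T)" "lam / sqrt mm < x"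
        by (subst (asm) Max_gr_iff) (auto simp: HS_finite)
      have "0 < lam / sqrt mm" using lam smm by simp
      then obtain u where u: "u \<in> HS m T" and ux: "lam / sqrt mm < \<bar>W T (real u) \<omega>\<bar> / real u"
        using x by auto
      have um: "m T \<le> u" and uT: "real u \<le> real T / 2" using u unfolding HS_def by auto
      have u1: "1 \<le> u" using um mT by simp
      define q where "q = u div m T"
      have "m T div m T \<le> u div m T" by (rule div_le_mono[OF um])
      then have q1: "1 \<le> q" unfolding q_def using mT by simp
      obtain j where j: "2^j \<le> q" "q < 2^(j+1)" using ex_power_ivl1[of 2 q] q1 by auto
      have lo: "2^j * m T \<le> u"
      proof -
        have "2^j * m T \<le> q * m T" using j(1) by simp
        also have "\<dots> \<le> u" unfolding q_def by simp
        finally show ?thesis .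
      qed
      have hi: "u \<le> 2^Suc j * m T"
      proof -
        have "u < (q + 1) * m T"
        proof -
          have e1: "q * m T + u mod m T = u" unfolding q_def by (rule div_mult_mod_eq)
          have e2: "u mod m T < m T" using mT by (intro mod_less_divisor) simp
          have "(q + 1) * m T = q * m T + m T" by simp
          then show ?thesis using e1 e2 by linarith
        qed
        also have "\<dots> \<le> 2^Suc j * m T" using j(2) by (intro mult_le_mono1) simp
        finally show ?thesis by simp
      qed
      have jT: "j < T"
      proof -
        have "2^j \<le> 2^j * m T" using mT by simp
        then have "2^j \<le> u" using lo by (rule le_trans)
        moreover have "u \<le> T" using uT by linarith
        ultimately have "2^j \<le> T" by simp
        moreover have "T < 2^T" by (rule less_exp)
        ultimately have "(2::nat)^j < 2^T" by (rule le_less_trans)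
        then show ?thesis using power_strict_increasing_iff[of "2::nat" j T] by simp
      qed
      have uP: "real u \<in> Pj j"
      proof -
        have "real u \<le> real (2^Suc j * m T)" using hi by (simp only: of_nat_le_iff)
        then have "real u \<le> 2^Suc j * mm" unfolding mm_def by simp
        then have "real u \<le> nj j" unfolding nj_def using uT by simp
        then show ?thesis unfolding Pj_def using lo by auto
      qed
      have big: "lj j < \<bar>W T (real u) \<omega>\<bar>"
      proof -
        have ur: "real u > 0" using u1 by simp
        have "lam * real u < sqrt mm * \<bar>W T (real u) \<omega>\<bar>" using ux ur smm by (simp add: field_simps)
        moreover have "lj j * sqrt mm \<le> lam * real u"
        proof -
          have "lj j * sqrt mm = lam * (2^j * mm)" unfolding lj_def using mm1 by (simp add: algebra_simps)
          also have "2^j * mm \<le> real u"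
          proof -
            have "real (2^j * m T) \<le> real u" using lo by (simp only: of_nat_le_iff)
            then show ?thesis unfolding mm_def by simp
          qed
          then have "lam * (2^j * mm) \<le> lam * real u" using lam by simp
          finally show ?thesis .
        qed
        ultimately have "lj j * sqrt mm < \<bar>W T (real u) \<omega>\<bar> * sqrt mm" by (simp add: mult.commute)
        then show ?thesis using smm by simp
      qed
      have "\<omega> \<in> B j" using B(2)[of j] jT sp uP big by blast
      then show "\<omega> \<in> (\<Union>j\<in>{..<T}. B j)" using jT by blast
    qed
    have "measure M (\<Union>j\<in>{..<T}. B j) \<le> (\<Sum>j<T. measure M (B j))"
      using B(1) by (intro measure_UNION_le) auto
    also have "\<dots> \<le> (\<Sum>j<T. 13 * 36^4 * 12 / lam^4 * (1/4)^j)" by (intro sum_mono Bb)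
    also have "\<dots> = 13 * 36^4 * 12 / lam^4 * (\<Sum>j<T. (1/4::real)^j)" by (simp add: sum_distrib_left)
    also have "\<dots> \<le> 13 * 36^4 * 12 / lam^4 * (4/3)"
    proof (intro mult_left_mono)
      have "(\<Sum>j<T. (1/4::real)^j) = (1 - (1/4)^T) / (1 - 1/4)" by (simp add: sum_gp_strict)
      also have "\<dots> \<le> 4/3" by simp
      finally show "(\<Sum>j<T. (1/4::real)^j) \<le> 4/3" .
    qed (use lam in simp)
    also have "\<dots> = 13 * 36^4 * 16 / lam^4" by simp
    finally have "measure M (\<Union>j\<in>{..<T}. B j) \<le> 13 * 36^4 * 16 / lam^4" .
    moreover have "(\<Union>j\<in>{..<T}. B j) \<in> sets M" using B(1) by auto
    ultimately show "\<exists>A\<in>sets M. {\<omega>\<in>space M. lam < hrF W m T \<omega>} \<subseteq> A \<and> measure M A \<le> 13 * 36^4 * 16 / lam^4"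
      using incl by blast
  qed
qed

lemma nat_floor_half: "nat \<lfloor>real T / 2\<rfloor> = T div 2"
proof -
  have "\<lfloor>real T / 2\<rfloor> = int (T div 2)"
    using floor_divide_of_nat_eq[of T 2] by simp
  then show ?thesis by simp
qed

lemma sum_split_at:
  fixes k T :: nat
  assumes "k \<le> T"
  shows "(\<Sum>s=1..T. f s) = (\<Sum>s=1..k. f s) + (\<Sum>s\<in>{k+1..T}. (f s :: real))"
proof -
  have "{1..T} = {1..k} \<union> {k+1..T}" using assms by auto
  moreover have "{1..k} \<inter> {k+1..T} = {}" by auto
  ultimately show ?thesis by (simp add: sum.union_disjoint)
qed

lemma powr_le_sqrt:
  assumes "1 \<le> x" "0 < k" "k < 1/2"
  shows "x powr k \<le> sqrt x"
proof -
  have "x powr k \<le> x powr (1/2)" using assms by (intro powr_mono) auto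
  also have "\<dots> = sqrt x" using assms by (simp add: powr_half_sqrt)
  finally show ?thesis .
qed

lemma abs_helper:
  fixes a s w B :: real assumes "\<bar>a - s*w\<bar> \<le> B" "s > 0" shows "\<bar>a\<bar> \<le> s*\<bar>w\<bar> + B"
proof -
  have "\<bar>s*w\<bar> = s*\<bar>w\<bar>" using assms(2) by (simp add: abs_mult)
  moreover have "\<bar>a\<bar> \<le> \<bar>a - s*w\<bar> + \<bar>s*w\<bar>" using abs_triangle_ineq[of "a - s*w" "s*w"] by simp
  ultimately show ?thesis using assms(1) by linarith
qed

locale setupA =
  fixes M :: "'a measure" and e :: "nat \<Rightarrow> 'a \<Rightarrow> real" and sig kap :: real
    and W1 W2 :: "nat \<Rightarrow> real \<Rightarrow> 'a \<Rightarrow> real"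
  assumes Mp: "prob_space M" and emeas: "\<And>t. e t \<in> borel_measurable M"
    and sig: "sig > 0" and kap: "0 < kap" "kap < 1/2"
    and W1: "\<And>T. std_wiener_on M (real T / 2) (W1 T)"
    and W2: "\<And>T. std_wiener_on M (real T / 2) (W2 T)"
    and OP1: "OP1_sup M (\<lambda>T. {1 .. real T / 2})
           (\<lambda>T x \<omega>. x powr (-kap) * \<bar>(\<Sum>s=1..nat \<lfloor>x\<rfloor>. e s \<omega>) - sig * W1 T x \<omega>\<bar>)"
    and OP2: "OP1_sup M (\<lambda>T. {real T / 2 .. real T - 1})
           (\<lambda>T x \<omega>. (real T - x) powr (-kap) *
              \<bar>(\<Sum>s\<in>{nat \<lfloor>x\<rfloor> + 1 .. T}. e s \<omega>) - sig * W2 T (real T - x) \<omega>\<bar>)"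
begin

definition "E t \<omega> = (\<Sum>s=1..t. e s \<omega>)"
definition "F1 T x \<omega> = x powr (-kap) * \<bar>(\<Sum>s=1..nat \<lfloor>x\<rfloor>. e s \<omega>) - sig * W1 T x \<omega>\<bar>"
definition "F2 T x \<omega> = (real T - x) powr (-kap) * \<bar>(\<Sum>s\<in>{nat \<lfloor>x\<rfloor> + 1 .. T}. e s \<omega>) - sig * W2 T (real T - x) \<omega>\<bar>"
definition "Q1 T = insert (real T / 2) (real ` {t. 1 \<le> t \<and> real t \<le> real T / 2})"
definition "Q2 T = insert (real T / 2) (real ` {t. real T / 2 \<le> real t \<and> t + 1 \<le> T})"
definition "R1 T \<omega> = Max (insert 0 ((\<lambda>x. F1 T x \<omega>) ` Q1 T))"
definition "R2 T \<omega> = Max (insert 0 ((\<lambda>x. F2 T x \<omega>) ` Q2 T))"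
definition "Gmax T \<omega> = Max ((\<lambda>t. \<bar>E t \<omega>\<bar>) ` {..T})"

lemma Q1_fin: "finite (Q1 T)"
proof -
  have "{t. 1 \<le> t \<and> real t \<le> real T / 2} \<subseteq> {..T}" by auto
  then show ?thesis unfolding Q1_def by (auto intro: finite_subset)
qed

lemma Q2_fin: "finite (Q2 T)"
proof -
  have "{t. real T / 2 \<le> real t \<and> t + 1 \<le> T} \<subseteq> {..T}" by auto
  then show ?thesis unfolding Q2_def by (auto intro: finite_subset)
qed

lemma Q1_sub: "2 \<le> T \<Longrightarrow> Q1 T \<subseteq> {1 .. real T / 2}"
  unfolding Q1_def by auto

lemma Q2_sub: "2 \<le> T \<Longrightarrow> Q2 T \<subseteq> {real T / 2 .. real T - 1}"
proof -
  assume T: "2 \<le> T"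
  have "real t \<le> real T - 1" if "t + 1 \<le> T" for t
  proof -
    have "real (t + 1) \<le> real T" using that by (simp only: of_nat_le_iff)
    then show ?thesis by simp
  qed
  then show ?thesis unfolding Q2_def using T by auto
qed

lemma R1_nonneg: "0 \<le> R1 T \<omega>" unfolding R1_def by (rule Max_ge) (auto simp: Q1_fin)
lemma R2_nonneg: "0 \<le> R2 T \<omega>" unfolding R2_def by (rule Max_ge) (auto simp: Q2_fin)
lemma F1_le: "x \<in> Q1 T \<Longrightarrow> F1 T x \<omega> \<le> R1 T \<omega>" unfolding R1_def by (rule Max_ge) (auto simp: Q1_fin)
lemma F2_le: "x \<in> Q2 T \<Longrightarrow> F2 T x \<omega> \<le> R2 T \<omega>" unfolding R2_def by (rule Max_ge) (auto simp: Q2_fin)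

lemma tight_R_gen:
  assumes OP: "OP1_sup M I F" and fin: "\<And>T. finite (Q T)"
    and sub: "\<And>T. 2 \<le> T \<Longrightarrow> Q T \<subseteq> I T"
  shows "tightP M (\<lambda>T \<omega>. Max (insert 0 ((\<lambda>x. F T x \<omega>) ` Q T)))"
  unfolding tightP_def
proof (intro allI impI)
  fix \<epsilon> :: real assume "\<epsilon> > 0"
  then obtain C T0 where C: "\<forall>T\<ge>T0. \<exists>A\<in>sets M. {\<omega>\<in>space M. \<exists>x\<in>I T. F T x \<omega> > C} \<subseteq> A \<and> measure M A < \<epsilon>"
    using OP unfolding OP1_sup_def by blast
  show "\<exists>C T0. \<forall>T\<ge>T0. \<exists>A\<in>sets M. {\<omega>\<in>space M. C < Max (insert 0 ((\<lambda>x. F T x \<omega>) ` Q T))} \<subseteq> A \<and> measure M A < \<epsilon>"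
  proof (intro exI[of _ "max C 0"] exI[of _ "max T0 2"] allI impI)
    fix T assume T: "max T0 2 \<le> T"
    then obtain A where A: "A\<in>sets M" "{\<omega>\<in>space M. \<exists>x\<in>I T. F T x \<omega> > C} \<subseteq> A" "measure M A < \<epsilon>"
      using C by auto
    have "{\<omega>\<in>space M. max C 0 < Max (insert 0 ((\<lambda>x. F T x \<omega>) ` Q T))} \<subseteq> {\<omega>\<in>space M. \<exists>x\<in>I T. F T x \<omega> > C}"
    proof safe
      fix \<omega> assume "\<omega> \<in> space M" "max C 0 < Max (insert 0 ((\<lambda>x. F T x \<omega>) ` Q T))"
      then obtain y where y: "y \<in> insert 0 ((\<lambda>x. F T x \<omega>) ` Q T)" "max C 0 < y"
        by (subst (asm) Max_gr_iff) (auto simp: fin)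
      then obtain x where "x \<in> Q T" "max C 0 < F T x \<omega>" by auto
      moreover have "x \<in> I T" using sub[of T] T \<open>x \<in> Q T\<close> by auto
      ultimately show "\<exists>x\<in>I T. F T x \<omega> > C" by auto
    qed
    then show "\<exists>A\<in>sets M. {\<omega>\<in>space M. max C 0 < Max (insert 0 ((\<lambda>x. F T x \<omega>) ` Q T))} \<subseteq> A \<and> measure M A < \<epsilon>"
      using A by blast
  qed
qed

lemma R1_tight: "tightP M R1"
proof -
  have "tightP M (\<lambda>T \<omega>. Max (insert 0 ((\<lambda>x. F1 T x \<omega>) ` Q1 T)))"
    by (rule tight_R_gen[OF OP1[folded F1_def[abs_def]] Q1_fin Q1_sub])
  then show ?thesis unfolding R1_def[abs_def] .
qed

lemma R2_tight: "tightP M R2"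
proof -
  have "tightP M (\<lambda>T \<omega>. Max (insert 0 ((\<lambda>x. F2 T x \<omega>) ` Q2 T)))"
    by (rule tight_R_gen[OF OP2[folded F2_def[abs_def]] Q2_fin Q2_sub])
  then show ?thesis unfolding R2_def[abs_def] .
qed

lemma unpow:
  assumes "0 < y" "y powr (-kap) * a \<le> R" "0 \<le> a"
  shows "a \<le> y powr kap * R"
proof -
  have "a = y powr kap * (y powr (-kap) * a)"
    using assms by (simp add: powr_minus field_simps)
  also have "\<dots> \<le> y powr kap * R" using assms by (intro mult_left_mono) auto
  finally show ?thesis .
qed

lemma c1: "1 \<le> t \<Longrightarrow> real t \<le> real T / 2 \<Longrightarrow> \<bar>E t \<omega> - sig * W1 T (real t) \<omega>\<bar> \<le> real t powr kap * R1 T \<omega>"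
proof -
  assume t: "1 \<le> t" "real t \<le> real T / 2"
  have "real t \<in> Q1 T" unfolding Q1_def using t by auto
  then have "F1 T (real t) \<omega> \<le> R1 T \<omega>" by (rule F1_le)
  then show ?thesis unfolding F1_def E_def using t by (intro unpow) auto
qed

lemma c2: "2 \<le> T \<Longrightarrow> \<bar>E (T div 2) \<omega> - sig * W1 T (real T / 2) \<omega>\<bar> \<le> (real T / 2) powr kap * R1 T \<omega>"
proof -
  assume T: "2 \<le> T"
  have "real T / 2 \<in> Q1 T" unfolding Q1_def by auto
  then have "F1 T (real T / 2) \<omega> \<le> R1 T \<omega>" by (rule F1_le)
  then show ?thesis unfolding F1_def E_def nat_floor_half using T by (intro unpow) auto
qed

lemma c3: "real T / 2 \<le> real t \<Longrightarrow> t + 1 \<le> T \<Longrightarrow>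
   \<bar>(\<Sum>s\<in>{t + 1 .. T}. e s \<omega>) - sig * W2 T (real T - real t) \<omega>\<bar> \<le> (real T - real t) powr kap * R2 T \<omega>"
proof -
  assume t: "real T / 2 \<le> real t" "t + 1 \<le> T"
  have "real t \<in> Q2 T" unfolding Q2_def using t by auto
  then have "F2 T (real t) \<omega> \<le> R2 T \<omega>" by (rule F2_le)
  moreover have "real T - real t > 0" using t by simp
  ultimately show ?thesis unfolding F2_def by (intro unpow) auto
qed

lemma c4: "2 \<le> T \<Longrightarrow> \<bar>(\<Sum>s\<in>{T div 2 + 1 .. T}. e s \<omega>) - sig * W2 T (real T / 2) \<omega>\<bar> \<le> (real T / 2) powr kap * R2 T \<omega>"
proof -
  assume T: "2 \<le> T"
  have "real T / 2 \<in> Q2 T" unfolding Q2_def by auto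
  then have "F2 T (real T / 2) \<omega> \<le> R2 T \<omega>" by (rule F2_le)
  moreover have "real T - real T / 2 = real T / 2" by simp
  ultimately show ?thesis unfolding F2_def nat_floor_half using T by (intro unpow) auto
qed


lemma Gmax_ge: "t \<le> T \<Longrightarrow> \<bar>E t \<omega>\<bar> \<le> Gmax T \<omega>"
  unfolding Gmax_def by (rule Max_ge) auto

lemma Gmax_nonneg: "0 \<le> Gmax T \<omega>"
  using Gmax_ge[of 0 T \<omega>] by simp

lemma E_split: "k \<le> T \<Longrightarrow> E T \<omega> = E k \<omega> + (\<Sum>s\<in>{k+1..T}. e s \<omega>)"
  unfolding E_def by (rule sum_split_at)

lemma in_PT: "t \<le> T div 2 \<Longrightarrow> real t \<in> PT T"
  unfolding PT_def by auto

lemma half_PT: "real T / 2 \<in> PT T"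
  unfolding PT_def by auto

lemma G_bound:
  assumes T: "2 \<le> T"
  shows "Gmax T \<omega> \<le> 2 * sig * (wmaxF W1 T \<omega> + wmaxF W2 T \<omega>) + 2 * real T powr kap * (R1 T \<omega> + R2 T \<omega>)"
proof -
  define V1 where "V1 = wmaxF W1 T \<omega>"
  define V2 where "V2 = wmaxF W2 T \<omega>"
  define P where "P = real T powr kap"
  have R1n: "0 \<le> R1 T \<omega>" and R2n: "0 \<le> R2 T \<omega>" by (rule R1_nonneg, rule R2_nonneg)
  have V1n: "0 \<le> V1" and V2n: "0 \<le> V2" unfolding V1_def V2_def by (rule wmaxF_nonneg)+
  have Pn: "0 \<le> P" unfolding P_def by simp
  have powle: "y powr kap \<le> P" if "0 \<le> y" "y \<le> real T" for y
    unfolding P_def using that kap by (intro powr_mono2) auto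
  have W1le: "\<bar>W1 T x \<omega>\<bar> \<le> V1" if "x \<in> PT T" for x unfolding V1_def by (rule wmaxF_ge[OF that])
  have W2le: "\<bar>W2 T x \<omega>\<bar> \<le> V2" if "x \<in> PT T" for x unfolding V2_def by (rule wmaxF_ge[OF that])
  have small: "\<bar>E t \<omega>\<bar> \<le> sig * V1 + P * R1 T \<omega>" if t: "real t \<le> real T / 2" for t
  proof (cases "t = 0")
    case True
    then show ?thesis using sig V1n Pn R1n unfolding E_def by simp
  next
    case False
    then have t1: "1 \<le> t" by simp
    have "t \<le> T div 2" using t by linarith
    then have w: "\<bar>W1 T (real t) \<omega>\<bar> \<le> V1" by (intro W1le in_PT)
    have "\<bar>E t \<omega>\<bar> \<le> sig * \<bar>W1 T (real t) \<omega>\<bar> + real t powr kap * R1 T \<omega>"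
      using c1[OF t1 t, of \<omega>] sig by (rule abs_helper)
    also have "\<dots> \<le> sig * V1 + P * R1 T \<omega>"
      using sig w powle[of "real t"] t R1n by (intro add_mono mult_left_mono mult_right_mono) auto
    finally show ?thesis .
  qed
  have ET: "\<bar>E T \<omega>\<bar> \<le> sig * V1 + P * R1 T \<omega> + sig * V2 + P * R2 T \<omega>"
  proof -
    have split: "E T \<omega> = E (T div 2) \<omega> + (\<Sum>s\<in>{T div 2+1..T}. e s \<omega>)" by (rule E_split) simp
    have a: "\<bar>E (T div 2) \<omega>\<bar> \<le> sig * V1 + P * R1 T \<omega>"
    proof -
      have "\<bar>E (T div 2) \<omega>\<bar> \<le> sig * \<bar>W1 T (real T / 2) \<omega>\<bar> + (real T / 2) powr kap * R1 T \<omega>"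
        using c2[OF T, of \<omega>] sig by (rule abs_helper)
      also have "\<dots> \<le> sig * V1 + P * R1 T \<omega>"
        using sig W1le[OF half_PT] powle[of "real T / 2"] R1n by (intro add_mono mult_left_mono mult_right_mono) auto
      finally show ?thesis .
    qed
    have b: "\<bar>\<Sum>s\<in>{T div 2+1..T}. e s \<omega>\<bar> \<le> sig * V2 + P * R2 T \<omega>"
    proof -
      have "\<bar>\<Sum>s\<in>{T div 2+1..T}. e s \<omega>\<bar> \<le> sig * \<bar>W2 T (real T / 2) \<omega>\<bar> + (real T / 2) powr kap * R2 T \<omega>"
        using c4[OF T, of \<omega>] sig by (rule abs_helper)
      also have "\<dots> \<le> sig * V2 + P * R2 T \<omega>"
        using sig W2le[OF half_PT] powle[of "real T / 2"] R2n by (intro add_mono mult_left_mono mult_right_mono) auto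
      finally show ?thesis .
    qed
    have "\<bar>E T \<omega>\<bar> \<le> \<bar>E (T div 2) \<omega>\<bar> + \<bar>\<Sum>s\<in>{T div 2+1..T}. e s \<omega>\<bar>" unfolding split by (rule abs_triangle_ineq)
    also have "\<dots> \<le> (sig * V1 + P * R1 T \<omega>) + (sig * V2 + P * R2 T \<omega>)" by (rule add_mono[OF a b])
    finally show ?thesis by simp
  qed
  have large: "\<bar>E t \<omega>\<bar> \<le> sig * V1 + P * R1 T \<omega> + 2 * (sig * V2 + P * R2 T \<omega>)"
    if t: "real T / 2 \<le> real t" "t + 1 \<le> T" for t
  proof -
    have split: "E T \<omega> = E t \<omega> + (\<Sum>s\<in>{t+1..T}. e s \<omega>)" by (rule E_split) (use t in simp)
    have ut: "T - t \<le> T div 2" using t by linarith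
    have rt: "real T - real t = real (T - t)" using t by simp
    have b: "\<bar>\<Sum>s\<in>{t+1..T}. e s \<omega>\<bar> \<le> sig * V2 + P * R2 T \<omega>"
    proof -
      have "\<bar>\<Sum>s\<in>{t+1..T}. e s \<omega>\<bar> \<le> sig * \<bar>W2 T (real T - real t) \<omega>\<bar> + (real T - real t) powr kap * R2 T \<omega>"
        using c3[OF t, of \<omega>] sig by (rule abs_helper)
      also have "\<dots> \<le> sig * V2 + P * R2 T \<omega>"
        using sig W2le[OF in_PT[OF ut]] powle[of "real T - real t"] R2n t unfolding rt
        by (intro add_mono mult_left_mono mult_right_mono) auto
      finally show ?thesis .
    qed
    have "E t \<omega> = E T \<omega> - (\<Sum>s\<in>{t+1..T}. e s \<omega>)" using split by simp
    then have "\<bar>E t \<omega>\<bar> \<le> \<bar>E T \<omega>\<bar> + \<bar>\<Sum>s\<in>{t+1..T}. e s \<omega>\<bar>" by (simp add: abs_triangle_ineq4)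
    also have "\<dots> \<le> (sig * V1 + P * R1 T \<omega> + sig * V2 + P * R2 T \<omega>) + (sig * V2 + P * R2 T \<omega>)"
      by (rule add_mono[OF ET b])
    also have "\<dots> = sig * V1 + P * R1 T \<omega> + 2 * (sig * V2 + P * R2 T \<omega>)" by (simp add: algebra_simps)
    finally show ?thesis .
  qed
  have all: "\<bar>E t \<omega>\<bar> \<le> 2 * sig * (V1 + V2) + 2 * P * (R1 T \<omega> + R2 T \<omega>)" if "t \<le> T" for t
  proof -
    have bnd: "sig * V1 + P * R1 T \<omega> + 2 * (sig * V2 + P * R2 T \<omega>) \<le> 2 * sig * (V1 + V2) + 2 * P * (R1 T \<omega> + R2 T \<omega>)"
      using sig V1n Pn R1n by (simp add: algebra_simps)
    have "real t \<le> real T / 2 \<or> t = T \<or> (real T / 2 \<le> real t \<and> t + 1 \<le> T)" using that by linarith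
    then consider "real t \<le> real T / 2" | "t = T" | "real T / 2 \<le> real t \<and> t + 1 \<le> T" by blast
    then show ?thesis
    proof cases
      case 1 then show ?thesis using small[OF 1] bnd sig V2n Pn R2n
        by (smt (verit) mult_nonneg_nonneg)
    next
      case 2 then show ?thesis using ET bnd sig V2n Pn R2n by (smt (verit) mult_nonneg_nonneg)
    next
      case 3 then show ?thesis using large[of t] bnd by linarith
    qed
  qed
  show ?thesis unfolding Gmax_def
    using all unfolding V1_def V2_def P_def by (intro Max.boundedI) auto
qed

lemma G_tight: "tightP M (\<lambda>T \<omega>. Gmax T \<omega> / sqrt (real T))"
proof -
  have t1: "tightP M (\<lambda>T \<omega>. wmaxF W1 T \<omega> / sqrt (real T))" by (rule wmax_tight[OF Mp W1])
  have t2: "tightP M (\<lambda>T \<omega>. wmaxF W2 T \<omega> / sqrt (real T))" by (rule wmax_tight[OF Mp W2])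
  have "tightP M (\<lambda>T \<omega>. 2 * sig * (wmaxF W1 T \<omega> / sqrt (real T)) + 2 * sig * (wmaxF W2 T \<omega> / sqrt (real T))
        + (2 * R1 T \<omega> + 2 * R2 T \<omega>))"
    using sig by (intro tightP_add tightP_cmult t1 t2 R1_tight R2_tight) auto
  then show ?thesis
  proof (rule tightP_mono)
    show "\<forall>\<^sub>F T in sequentially. \<forall>\<omega>\<in>space M. Gmax T \<omega> / sqrt (real T) \<le>
        2 * sig * (wmaxF W1 T \<omega> / sqrt (real T)) + 2 * sig * (wmaxF W2 T \<omega> / sqrt (real T)) + (2 * R1 T \<omega> + 2 * R2 T \<omega>)"
      unfolding eventually_sequentially
    proof (intro exI[of _ 2] allI impI ballI)
      fix T :: nat and \<omega> assume T: "2 \<le> T"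
      have sT: "sqrt (real T) > 0" using T by simp
      have pk: "real T powr kap / sqrt (real T) \<le> 1"
        using powr_le_sqrt[of "real T" kap] T kap sT by (simp add: divide_le_eq)
      have R: "0 \<le> R1 T \<omega> + R2 T \<omega>" using R1_nonneg R2_nonneg by (simp add: add_nonneg_nonneg)
      have "Gmax T \<omega> / sqrt (real T) \<le> (2 * sig * (wmaxF W1 T \<omega> + wmaxF W2 T \<omega>) + 2 * real T powr kap * (R1 T \<omega> + R2 T \<omega>)) / sqrt (real T)"
        using G_bound[OF T] sT by (intro divide_right_mono) auto
      also have "\<dots> = 2 * sig * (wmaxF W1 T \<omega> / sqrt (real T)) + 2 * sig * (wmaxF W2 T \<omega> / sqrt (real T))
          + 2 * (real T powr kap / sqrt (real T)) * (R1 T \<omega> + R2 T \<omega>)"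
        by (simp add: add_divide_distrib distrib_left)
      also have "\<dots> \<le> 2 * sig * (wmaxF W1 T \<omega> / sqrt (real T)) + 2 * sig * (wmaxF W2 T \<omega> / sqrt (real T))
          + 2 * 1 * (R1 T \<omega> + R2 T \<omega>)"
        using pk R by (intro add_left_mono mult_right_mono mult_left_mono) auto
      finally show "Gmax T \<omega> / sqrt (real T) \<le>
        2 * sig * (wmaxF W1 T \<omega> / sqrt (real T)) + 2 * sig * (wmaxF W2 T \<omega> / sqrt (real T)) + (2 * R1 T \<omega> + 2 * R2 T \<omega>)"
        by simp
    qed
  qed
qed


definition "ND m T \<omega> = sig * hrF W1 m T \<omega> + sig * hrF W2 m T \<omega> + R1 T \<omega> + R2 T \<omega> + 6 * (Gmax T \<omega> / sqrt (real T))"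

lemma ND_tight:
  assumes "\<forall>\<^sub>F T in sequentially. 1 \<le> m T"
  shows "tightP M (ND m)"
  unfolding ND_def[abs_def]
  using sig by (intro tightP_add tightP_cmult hr_tight[OF Mp W1 assms] hr_tight[OF Mp W2 assms]
      R1_tight R2_tight G_tight) auto

lemma H1:
  fixes mm t R :: real
  assumes "1 \<le> mm" "mm \<le> t" "0 \<le> R"
  shows "sqrt mm * (t powr kap * R) / t \<le> R"
proof -
  have t1: "1 \<le> t" using assms by simp
  have "sqrt mm * t powr kap \<le> sqrt t * sqrt t"
    using assms t1 powr_le_sqrt[of t kap] kap by (intro mult_mono) auto
  also have "\<dots> = t" using t1 by simp
  finally have a: "sqrt mm * t powr kap \<le> t" .
  have "sqrt mm * (t powr kap * R) / t = (sqrt mm * t powr kap) * R / t" by (simp add: mult.assoc)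
  also have "\<dots> \<le> t * R / t" using a assms by (intro divide_right_mono mult_right_mono) auto
  also have "\<dots> = R" using t1 by simp
  finally show ?thesis .
qed

lemma H2:
  fixes mm T G :: real
  assumes "0 \<le> mm" "mm \<le> T" "0 < T" "0 \<le> G"
  shows "sqrt mm * (G / (T / 2)) \<le> 2 * (G / sqrt T)"
proof -
  have "sqrt mm * (G / (T / 2)) = 2 * (sqrt mm * G / T)" by simp
  also have "sqrt mm * G / T \<le> sqrt T * G / T" using assms by (intro divide_right_mono mult_right_mono) auto
  also have "sqrt T * G / T = G / sqrt T" using assms
    by (metis divide_divide_eq_right real_div_sqrt less_eq_real_def times_divide_eq_left mult.commute)
  finally show ?thesis by simp
qed

lemma ND_bound:
  assumes T: "2 \<le> T" and m1: "1 \<le> m T" and m2: "2 * m T \<le> T" and t: "m T \<le> t" "t \<le> T - m T"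
  shows "sqrt (real (m T)) * \<bar>E t \<omega> / real t - (E T \<omega> - E t \<omega>) / real (T - t)\<bar> \<le> ND m T \<omega>"
proof -
  define mm where "mm = real (m T)"
  define G where "G = Gmax T \<omega>"
  have mm1: "1 \<le> mm" using m1 unfolding mm_def by simp
  have Gn: "0 \<le> G" unfolding G_def by (rule Gmax_nonneg)
  have tT: "t \<le> T" using t by simp
  have t1: "1 \<le> t" using t m1 by simp
  have Tt: "t < T" using t m1 m2 by simp
  have rTt: "real (T - t) = real T - real t" using tT by simp
  have rt: "real t > 0" using t1 by simp
  have rTt0: "real (T - t) > 0" using Tt by simp
  have mmT: "mm \<le> real T" unfolding mm_def using m2 by simp
  have Tpos: "0 < real T" using T by simp
  have hh: "sqrt mm * \<bar>a / real t - b / real (T - t)\<bar> \<le> sqrt mm * (\<bar>a\<bar> / real t) + sqrt mm * (\<bar>b\<bar> / real (T - t))" for a b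
  proof -
    have "\<bar>a / real t - b / real (T - t)\<bar> \<le> \<bar>a\<bar> / real t + \<bar>b\<bar> / real (T - t)"
      using abs_triangle_ineq4[of "a / real t" "b / real (T - t)"] rt rTt0 by simp
    then have "sqrt mm * \<bar>a / real t - b / real (T - t)\<bar> \<le> sqrt mm * (\<bar>a\<bar> / real t + \<bar>b\<bar> / real (T - t))"
      by (rule mult_left_mono) (use mm1 in simp)
    then show ?thesis by (simp add: distrib_left)
  qed
  have Rn: "0 \<le> R1 T \<omega>" "0 \<le> R2 T \<omega>" by (rule R1_nonneg, rule R2_nonneg)
  have hn: "0 \<le> hrF W1 m T \<omega>" "0 \<le> hrF W2 m T \<omega>" by (rule hrF_nonneg)+
  have ND_eq: "ND m T \<omega> = sig * hrF W1 m T \<omega> + sig * hrF W2 m T \<omega> + R1 T \<omega> + R2 T \<omega> + 6 * (G / sqrt (real T))"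
    unfolding ND_def G_def ..
  have Gs: "0 \<le> G / sqrt (real T)" using Gn by simp
  show ?thesis
  proof (cases "real t \<le> real T / 2")
    case True
    have tHS: "t \<in> HS m T" unfolding HS_def using t True by auto
    have a: "\<bar>E t \<omega>\<bar> \<le> sig * \<bar>W1 T (real t) \<omega>\<bar> + real t powr kap * R1 T \<omega>"
      using c1[OF t1 True, of \<omega>] sig by (rule abs_helper)
    have A: "sqrt mm * (\<bar>E t \<omega>\<bar> / real t) \<le> sig * hrF W1 m T \<omega> + R1 T \<omega>"
    proof -
      have "sqrt mm * (\<bar>E t \<omega>\<bar> / real t) \<le> sqrt mm * ((sig * \<bar>W1 T (real t) \<omega>\<bar> + real t powr kap * R1 T \<omega>) / real t)"
        using a rt mm1 by (intro mult_left_mono divide_right_mono) auto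
      also have "\<dots> = sig * (sqrt mm * (\<bar>W1 T (real t) \<omega>\<bar> / real t)) + sqrt mm * (real t powr kap * R1 T \<omega>) / real t"
        by (simp add: add_divide_distrib distrib_left)
      also have "\<dots> \<le> sig * hrF W1 m T \<omega> + R1 T \<omega>"
      proof (intro add_mono mult_left_mono)
        show "sqrt mm * (\<bar>W1 T (real t) \<omega>\<bar> / real t) \<le> hrF W1 m T \<omega>" unfolding mm_def by (rule hrF_ge[OF tHS])
        show "sqrt mm * (real t powr kap * R1 T \<omega>) / real t \<le> R1 T \<omega>"
          using mm1 t Rn unfolding mm_def by (intro H1) auto
      qed (use sig in auto)
      finally show ?thesis .
    qed
    have B: "sqrt mm * (\<bar>E T \<omega> - E t \<omega>\<bar> / real (T - t)) \<le> 4 * (G / sqrt (real T))"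
    proof -
      have "\<bar>E T \<omega> - E t \<omega>\<bar> \<le> 2 * G"
        using Gmax_ge[of T T \<omega>] Gmax_ge[OF tT, of \<omega>] abs_triangle_ineq4[of "E T \<omega>" "E t \<omega>"] unfolding G_def by linarith
      moreover have "real T / 2 \<le> real (T - t)" using True rTt by simp
      ultimately have "\<bar>E T \<omega> - E t \<omega>\<bar> / real (T - t) \<le> 2 * G / (real T / 2)"
        using Gn Tpos by (intro frac_le) auto
      then have "sqrt mm * (\<bar>E T \<omega> - E t \<omega>\<bar> / real (T - t)) \<le> sqrt mm * (2 * G / (real T / 2))"
        using mm1 by (intro mult_left_mono) auto
      also have "\<dots> = 2 * (sqrt mm * (G / (real T / 2)))" by simp
      also have "\<dots> \<le> 2 * (2 * (G / sqrt (real T)))" using H2[of mm "real T" G] mm1 mmT Tpos Gn by simp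
      finally show ?thesis by simp
    qed
    show ?thesis unfolding mm_def[symmetric] ND_eq
      using hh[of "E t \<omega>" "E T \<omega> - E t \<omega>"] A B sig hn Rn Gs
      by (smt (verit) mult_nonneg_nonneg)
  next
    case False
    have t2: "t + 1 \<le> T" using t m1 by simp
    have Th: "real T / 2 \<le> real t" using False by simp
    define u where "u = T - t"
    have ur: "real u = real T - real t" unfolding u_def using tT by simp
    have uHS: "u \<in> HS m T" unfolding HS_def u_def using t False by auto
    have A: "sqrt mm * (\<bar>E t \<omega>\<bar> / real t) \<le> 2 * (G / sqrt (real T))"
    proof -
      have "\<bar>E t \<omega>\<bar> / real t \<le> G / (real T / 2)"
        using Gmax_ge[OF tT, of \<omega>] Th Gn Tpos unfolding G_def by (intro frac_le) auto
      then have "sqrt mm * (\<bar>E t \<omega>\<bar> / real t) \<le> sqrt mm * (G / (real T / 2))" using mm1 by (intro mult_left_mono) auto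
      also have "\<dots> \<le> 2 * (G / sqrt (real T))" using H2[of mm "real T" G] mm1 mmT Tpos Gn by simp
      finally show ?thesis .
    qed
    have split: "E T \<omega> = E t \<omega> + (\<Sum>s\<in>{t+1..T}. e s \<omega>)" by (rule E_split[OF tT])
    have a: "\<bar>E T \<omega> - E t \<omega>\<bar> \<le> sig * \<bar>W2 T (real u) \<omega>\<bar> + real u powr kap * R2 T \<omega>"
      using c3[OF Th t2, of \<omega>] sig split ur by (simp add: abs_helper)
    have B: "sqrt mm * (\<bar>E T \<omega> - E t \<omega>\<bar> / real (T - t)) \<le> sig * hrF W2 m T \<omega> + R2 T \<omega>"
    proof -
      have ru: "real u > 0" using rTt0 unfolding u_def .
      have "sqrt mm * (\<bar>E T \<omega> - E t \<omega>\<bar> / real u) \<le> sqrt mm * ((sig * \<bar>W2 T (real u) \<omega>\<bar> + real u powr kap * R2 T \<omega>) / real u)"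
        using a ru mm1 by (intro mult_left_mono divide_right_mono) auto
      also have "\<dots> = sig * (sqrt mm * (\<bar>W2 T (real u) \<omega>\<bar> / real u)) + sqrt mm * (real u powr kap * R2 T \<omega>) / real u"
        by (simp add: add_divide_distrib distrib_left)
      also have "\<dots> \<le> sig * hrF W2 m T \<omega> + R2 T \<omega>"
      proof (intro add_mono mult_left_mono)
        show "sqrt mm * (\<bar>W2 T (real u) \<omega>\<bar> / real u) \<le> hrF W2 m T \<omega>" unfolding mm_def by (rule hrF_ge[OF uHS])
        show "sqrt mm * (real u powr kap * R2 T \<omega>) / real u \<le> R2 T \<omega>"
          using mm1 uHS Rn unfolding mm_def HS_def by (intro H1) auto
      qed (use sig in auto)
      finally show ?thesis unfolding u_def .
    qed
    show ?thesis unfolding mm_def[symmetric] ND_eq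
      using hh[of "E t \<omega>" "E T \<omega> - E t \<omega>"] A B sig hn Rn Gs
      by (smt (verit) mult_nonneg_nonneg)
  qed
qed

end

lemma max_perturb:
  fixes d b :: "nat \<Rightarrow> real"
  assumes S: "finite S" "t0 \<in> S" and dle: "\<forall>t\<in>S. \<bar>d t\<bar> \<le> \<bar>d t0\<bar>" and ble: "\<forall>t\<in>S. \<bar>b t\<bar> \<le> B"
  shows "\<bar>Max ((\<lambda>t. \<bar>d t + b t\<bar>) ` S) - \<bar>d t0\<bar>\<bar> \<le> B"
proof -
  have lo: "\<bar>d t0 + b t0\<bar> \<le> Max ((\<lambda>t. \<bar>d t + b t\<bar>) ` S)" using S by (intro Max_ge) auto
  have "\<bar>d t0\<bar> \<le> \<bar>d t0 + b t0\<bar> + \<bar>b t0\<bar>" using abs_triangle_ineq4[of "d t0 + b t0" "b t0"] by simp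
  moreover have "\<bar>b t0\<bar> \<le> B" using ble S by auto
  ultimately have lo': "\<bar>d t0\<bar> - B \<le> Max ((\<lambda>t. \<bar>d t + b t\<bar>) ` S)" using lo by linarith
  have hi: "Max ((\<lambda>t. \<bar>d t + b t\<bar>) ` S) \<le> \<bar>d t0\<bar> + B"
  proof (rule Max.boundedI)
    show "finite ((\<lambda>t. \<bar>d t + b t\<bar>) ` S)" using S by auto
    show "(\<lambda>t. \<bar>d t + b t\<bar>) ` S \<noteq> {}" using S by auto
    fix y assume "y \<in> (\<lambda>t. \<bar>d t + b t\<bar>) ` S"
    then obtain t where t: "t \<in> S" "y = \<bar>d t + b t\<bar>" by auto
    have "\<bar>d t + b t\<bar> \<le> \<bar>d t\<bar> + \<bar>b t\<bar>" by (rule abs_triangle_ineq)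
    moreover have "\<bar>d t\<bar> \<le> \<bar>d t0\<bar>" "\<bar>b t\<bar> \<le> B" using t dle ble by auto
    ultimately show "y \<le> \<bar>d t0\<bar> + B" using t by linarith
  qed
  show ?thesis using lo' hi by (simp add: abs_le_iff)
qed

lemma div_iff:
  assumes Mp: "prob_space M" and meas: "\<And>T C. {\<omega>\<in>space M. Y T \<omega> \<le> C} \<in> sets M" and tN: "tightP M N"
    and bnd: "\<forall>\<^sub>F T in sequentially. \<forall>\<omega>\<in>space M. \<bar>Y T \<omega> - g T\<bar> \<le> N T \<omega>"
  shows "diverges_in_prob M Y \<longleftrightarrow> filterlim g at_top sequentially"
proof
  interpret prob_space M by fact
  obtain T2 where T2: "\<And>T \<omega>. T \<ge> T2 \<Longrightarrow> \<omega> \<in> space M \<Longrightarrow> \<bar>Y T \<omega> - g T\<bar> \<le> N T \<omega>"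
    using bnd unfolding eventually_sequentially by blast
  {
    assume div: "diverges_in_prob M Y"
    show "filterlim g at_top sequentially"
    proof (rule ccontr)
      assume "\<not> filterlim g at_top sequentially"
      then obtain Z where "\<not> (\<forall>\<^sub>F T in sequentially. Z \<le> g T)" unfolding filterlim_at_top by blast
      then have fr: "\<And>T0. \<exists>T\<ge>T0. g T < Z" unfolding eventually_sequentially by (meson not_le)
      obtain C T0 where C: "\<forall>T\<ge>T0. \<exists>A\<in>sets M. {\<omega>\<in>space M. C < N T \<omega>} \<subseteq> A \<and> measure M A < 1/2"
        using tN unfolding tightP_def by (meson zero_less_divide_1_iff zero_less_numeral)
      have "((\<lambda>T. measure M {\<omega>\<in>space M. Y T \<omega> \<le> Z + C}) \<longlongrightarrow> 0) sequentially"
        using div unfolding diverges_in_prob_def by blast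
      then have "\<forall>\<^sub>F T in sequentially. measure M {\<omega>\<in>space M. Y T \<omega> \<le> Z + C} < 1/2"
        by (rule order_tendstoD) simp
      then obtain T1 where T1: "\<And>T. T \<ge> T1 \<Longrightarrow> measure M {\<omega>\<in>space M. Y T \<omega> \<le> Z + C} < 1/2"
        unfolding eventually_sequentially by blast
      obtain T where T: "T \<ge> max T0 (max T1 T2)" "g T < Z" using fr by blast
      obtain A where A: "A \<in> sets M" "{\<omega>\<in>space M. C < N T \<omega>} \<subseteq> A" "measure M A < 1/2" using C T by auto
      have "space M - A \<subseteq> {\<omega>\<in>space M. Y T \<omega> \<le> Z + C}"
      proof
        fix \<omega> assume w: "\<omega> \<in> space M - A"
        then have "N T \<omega> \<le> C" using A(2) by force
        moreover have "\<bar>Y T \<omega> - g T\<bar> \<le> N T \<omega>" using T2[of T \<omega>] T w by auto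
        ultimately show "\<omega> \<in> {\<omega>\<in>space M. Y T \<omega> \<le> Z + C}" using T(2) w by auto
      qed
      then have "measure M (space M - A) \<le> measure M {\<omega>\<in>space M. Y T \<omega> \<le> Z + C}"
        using meas by (intro finite_measure_mono) auto
      moreover have "measure M (space M - A) = 1 - measure M A" using A(1) by (rule prob_compl)
      ultimately show False using T1[of T] T A(3) by linarith
    qed
  }
  {
    assume fl: "filterlim g at_top sequentially"
    show "diverges_in_prob M Y" unfolding diverges_in_prob_def
    proof (intro allI LIMSEQ_I)
      fix C r :: real assume r: "0 < r"
      obtain C' T0 where C': "\<forall>T\<ge>T0. \<exists>A\<in>sets M. {\<omega>\<in>space M. C' < N T \<omega>} \<subseteq> A \<and> measure M A < r"
        using tN r unfolding tightP_def by blast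
      have "\<forall>\<^sub>F T in sequentially. C + C' + 1 \<le> g T" using fl unfolding filterlim_at_top by blast
      then obtain T1 where T1: "\<And>T. T \<ge> T1 \<Longrightarrow> C + C' + 1 \<le> g T" unfolding eventually_sequentially by blast
      show "\<exists>no. \<forall>n\<ge>no. norm (measure M {\<omega>\<in>space M. Y n \<omega> \<le> C} - 0) < r"
      proof (intro exI[of _ "max T0 (max T1 T2)"] allI impI)
        fix T assume T: "max T0 (max T1 T2) \<le> T"
        obtain A where A: "A \<in> sets M" "{\<omega>\<in>space M. C' < N T \<omega>} \<subseteq> A" "measure M A < r" using C' T by auto
        have "{\<omega>\<in>space M. Y T \<omega> \<le> C} \<subseteq> A"
        proof
          fix \<omega> assume w: "\<omega> \<in> {\<omega>\<in>space M. Y T \<omega> \<le> C}"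
          have "\<bar>Y T \<omega> - g T\<bar> \<le> N T \<omega>" using T2[of T \<omega>] T w by auto
          moreover have "C + C' + 1 \<le> g T" using T1[of T] T by auto
          ultimately have "C' < N T \<omega>" using w by auto
          then show "\<omega> \<in> A" using A(2) w by auto
        qed
        then have "measure M {\<omega>\<in>space M. Y T \<omega> \<le> C} \<le> measure M A" using A(1) by (intro finite_measure_mono)
        then show "norm (measure M {\<omega>\<in>space M. Y T \<omega> \<le> C} - 0) < r" using A(3) by simp
      qed
    qed
  }
qed


locale drift =
  fixes mu :: "nat \<Rightarrow> real" and ts T :: nat
  assumes ts: "1 < ts" "ts < T" and muc: "\<forall>t\<in>{1..T}. mu t = (if t \<le> ts then mu 1 else mu T)"
begin

definition "c t = (\<Sum>s=1..t. mu s)"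
definition "Dl = mu (ts + 1) - mu ts"

lemma mu_lo: "1 \<le> x \<Longrightarrow> x \<le> ts \<Longrightarrow> mu x = mu 1"
proof -
  assume x: "1 \<le> x" "x \<le> ts"
  have "x \<in> {1..T}" using x ts by simp
  from bspec[OF muc this] show ?thesis using x by simp
qed

lemma mu_hi: "ts < x \<Longrightarrow> x \<le> T \<Longrightarrow> mu x = mu T"
proof -
  assume x: "ts < x" "x \<le> T"
  have "x \<in> {1..T}" using x ts by simp
  from bspec[OF muc this] show ?thesis using x by simp
qed

lemma Dl_eq: "Dl = mu T - mu 1"
proof -
  have "mu (ts + 1) = mu T" using ts by (intro mu_hi) auto
  moreover have "mu ts = mu 1" using ts by (intro mu_lo) auto
  ultimately show ?thesis unfolding Dl_def by simp
qed

lemma c_le: "t \<le> ts \<Longrightarrow> c t = real t * mu 1"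
proof -
  assume t: "t \<le> ts"
  have "c t = (\<Sum>s=1..t. mu 1)" unfolding c_def
  proof (rule sum.cong)
    fix x assume "x \<in> {1..t}"
    then show "mu x = mu 1" using t by (intro mu_lo) auto
  qed simp
  then show ?thesis by simp
qed

lemma c_ge: "ts \<le> t \<Longrightarrow> t \<le> T \<Longrightarrow> c t = real ts * mu 1 + (real t - real ts) * mu T"
proof -
  assume t: "ts \<le> t" "t \<le> T"
  have "c t = c ts + (\<Sum>s\<in>{ts+1..t}. mu s)" unfolding c_def by (rule sum_split_at[OF t(1)])
  also have "(\<Sum>s\<in>{ts+1..t}. mu s) = (\<Sum>s\<in>{ts+1..t}. mu T)"
  proof (rule sum.cong)
    fix x assume "x \<in> {ts+1..t}"
    then show "mu x = mu T" using t by (intro mu_hi) auto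
  qed simp
  also have "\<dots> = (real t - real ts) * mu T" using t by simp
  finally show ?thesis using c_le[of ts] by simp
qed

definition "dA t = c t - real t / real T * c T"

lemma dA_le: "t \<le> ts \<Longrightarrow> dA t = - (real t * (real T - real ts) * Dl / real T)"
  using ts unfolding dA_def Dl_eq by (simp add: c_le c_ge field_simps)

lemma dA_ge: "ts \<le> t \<Longrightarrow> t \<le> T \<Longrightarrow> dA t = - (real ts * (real T - real t) * Dl / real T)"
  using ts unfolding dA_def Dl_eq by (simp add: c_ge field_simps)

lemma dA_ts: "\<bar>dA ts\<bar> = real ts * (real T - real ts) * \<bar>Dl\<bar> / real T"
  using dA_le[of ts] ts by (simp add: abs_mult)

lemma dA_max: "t \<le> T \<Longrightarrow> \<bar>dA t\<bar> \<le> \<bar>dA ts\<bar>"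
proof -
  assume t: "t \<le> T"
  have T0: "real T > 0" using ts by simp
  show ?thesis
  proof (cases "t \<le> ts")
    case True
    have "\<bar>dA t\<bar> = real t * (real T - real ts) * \<bar>Dl\<bar> / real T"
      using dA_le[OF True] ts by (simp add: abs_mult)
    also have "\<dots> \<le> real ts * (real T - real ts) * \<bar>Dl\<bar> / real T"
      using True ts T0 by (intro divide_right_mono mult_right_mono) auto
    finally show ?thesis using dA_ts by simp
  next
    case False
    have "\<bar>dA t\<bar> = real ts * (real T - real t) * \<bar>Dl\<bar> / real T"
      using dA_ge[of t] False t by (simp add: abs_mult)
    also have "\<dots> \<le> real ts * (real T - real ts) * \<bar>Dl\<bar> / real T"
      using False ts T0 by (intro divide_right_mono mult_right_mono mult_left_mono) auto
    finally show ?thesis using dA_ts by simp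
  qed
qed

definition "d2 t = c t / real t - (c T - c t) / real (T - t)"

lemma d2_le: "1 \<le> t \<Longrightarrow> t \<le> ts \<Longrightarrow> d2 t = (real T - real ts) * (- Dl) / (real T - real t)"
proof -
  assume t: "1 \<le> t" "t \<le> ts"
  have "real (T - t) = real T - real t" using t ts by simp
  moreover have "real T - real t > 0" using t ts by simp
  ultimately show ?thesis unfolding d2_def Dl_eq using t ts by (simp add: c_le c_ge field_simps)
qed

lemma d2_ge: "ts \<le> t \<Longrightarrow> t < T \<Longrightarrow> d2 t = real ts * (- Dl) / real t"
proof -
  assume t: "ts \<le> t" "t < T"
  have "real (T - t) = real T - real t" using t by simp
  moreover have "real T - real t > 0" using t by simp
  moreover have "real t > 0" using t ts by simp
  ultimately show ?thesis unfolding d2_def Dl_eq using t ts by (simp add: c_ge field_simps)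
qed

definition "t0 m = (if ts < m then m else if T - m < ts then T - m else ts)"

lemma d2_max:
  assumes m: "1 \<le> m" "2 * m \<le> T"
  shows "t0 m \<in> {m..T - m}" "\<And>t. t \<in> {m..T - m} \<Longrightarrow> \<bar>d2 t\<bar> \<le> \<bar>d2 (t0 m)\<bar>"
    "\<bar>d2 (t0 m)\<bar> = real (min (min ts (T - ts)) m) / real m * \<bar>Dl\<bar>"
proof -
  have mr: "real m \<ge> 1" using m by simp
  consider (a) "ts < m" | (b) "\<not> ts < m" "T - m < ts" | (c) "m \<le> ts" "ts \<le> T - m" by linarith
  then have "t0 m \<in> {m..T - m} \<and> (\<forall>t\<in>{m..T - m}. \<bar>d2 t\<bar> \<le> \<bar>d2 (t0 m)\<bar>) \<and>
      \<bar>d2 (t0 m)\<bar> = real (min (min ts (T - ts)) m) / real m * \<bar>Dl\<bar>"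
  proof cases
    case a
    have tm: "t0 m = m" unfolding t0_def using a by simp
    have v: "\<bar>d2 t\<bar> = real ts / real t * \<bar>Dl\<bar>" if "t \<in> {m..T - m}" for t
    proof -
      have "ts \<le> t" "t < T" using that a m by auto
      then have "d2 t = real ts * (- Dl) / real t" by (rule d2_ge)
      then show ?thesis by (simp add: abs_mult abs_divide)
    qed
    have mn: "min (min ts (T - ts)) m = ts" using a m by simp
    show ?thesis
    proof (intro conjI ballI)
      show "t0 m \<in> {m..T - m}" unfolding tm using m by simp
      fix t assume t: "t \<in> {m..T - m}"
      have "real ts / real t \<le> real ts / real m" using t mr by (intro divide_left_mono) auto
      have mm: "m \<in> {m..T - m}" using m by simp
      have "real ts / real t * \<bar>Dl\<bar> \<le> real ts / real m * \<bar>Dl\<bar>" using \<open>real ts / real t \<le> real ts / real m\<close> by (rule mult_right_mono) simp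
      then show "\<bar>d2 t\<bar> \<le> \<bar>d2 (t0 m)\<bar>" unfolding tm v[OF t] v[OF mm] .
    next
      show "\<bar>d2 (t0 m)\<bar> = real (min (min ts (T - ts)) m) / real m * \<bar>Dl\<bar>"
        unfolding tm mn using v[of m] m mr by simp
    qed
  next
    case b
    have tm: "t0 m = T - m" unfolding t0_def using b by simp
    have v: "\<bar>d2 t\<bar> = (real T - real ts) / (real T - real t) * \<bar>Dl\<bar>" if "t \<in> {m..T - m}" for t
    proof -
      have "1 \<le> t" "t \<le> ts" using that b m by auto
      then have "d2 t = (real T - real ts) * (- Dl) / (real T - real t)" by (rule d2_le)
      moreover have "real T - real ts \<ge> 0" "real T - real t \<ge> 0" using ts that by auto
      ultimately show ?thesis by (simp add: abs_mult abs_divide)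
    qed
    have mn: "min (min ts (T - ts)) m = T - ts" using b m by simp
    have rTm: "real T - real (T - m) = real m" using m by simp
    show ?thesis
    proof (intro conjI ballI)
      show "t0 m \<in> {m..T - m}" unfolding tm using m by simp
      fix t assume t: "t \<in> {m..T - m}"
      have "real T - real t \<ge> real m" using t m by auto
      then have "(real T - real ts) / (real T - real t) \<le> (real T - real ts) / real m"
        using mr ts by (intro divide_left_mono) auto
      then have le: "(real T - real ts) / (real T - real t) * \<bar>Dl\<bar> \<le> (real T - real ts) / real m * \<bar>Dl\<bar>"
        by (rule mult_right_mono) simp
      have mm: "T - m \<in> {m..T - m}" using m by simp
      from le show "\<bar>d2 t\<bar> \<le> \<bar>d2 (t0 m)\<bar>" unfolding tm v[OF t] v[OF mm] rTm .
    next
      have "real (T - ts) = real T - real ts" using ts by simp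
      then show "\<bar>d2 (t0 m)\<bar> = real (min (min ts (T - ts)) m) / real m * \<bar>Dl\<bar>"
        unfolding tm mn using v[of "T - m"] m rTm by simp
    qed
  next
    case c
    have tm: "t0 m = ts" unfolding t0_def using c by simp
    have mn: "min (min ts (T - ts)) m = m" using c by simp
    have vts: "\<bar>d2 ts\<bar> = \<bar>Dl\<bar>" using d2_le[of ts] ts by (simp add: abs_mult abs_divide)
    show ?thesis
    proof (intro conjI ballI)
      show "t0 m \<in> {m..T - m}" unfolding tm using c by simp
      fix t assume t: "t \<in> {m..T - m}"
      show "\<bar>d2 t\<bar> \<le> \<bar>d2 (t0 m)\<bar>"
      proof (cases "t \<le> ts")
        case True
        have "1 \<le> t" using t m by auto
        then have "d2 t = (real T - real ts) * (- Dl) / (real T - real t)" using True by (rule d2_le)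
        moreover have "real T - real ts \<ge> 0" "real T - real t \<ge> 0" using ts True by auto
        ultimately have "\<bar>d2 t\<bar> = (real T - real ts) / (real T - real t) * \<bar>Dl\<bar>" by (simp add: abs_mult abs_divide)
        also have "\<dots> \<le> 1 * \<bar>Dl\<bar>" using True t m ts by (intro mult_right_mono) auto
        finally show ?thesis unfolding tm vts by simp
      next
        case False
        have "ts \<le> t" "t < T" using False t m by auto
        then have "d2 t = real ts * (- Dl) / real t" by (rule d2_ge)
        then have "\<bar>d2 t\<bar> = real ts / real t * \<bar>Dl\<bar>" by (simp add: abs_mult abs_divide)
        also have "\<dots> \<le> 1 * \<bar>Dl\<bar>" using False by (intro mult_right_mono) auto
        finally show ?thesis unfolding tm vts by simp
      qed
    next
      show "\<bar>d2 (t0 m)\<bar> = real (min (min ts (T - ts)) m) / real m * \<bar>Dl\<bar>"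
        unfolding tm mn vts using mr by simp
    qed
  qed
  then show "t0 m \<in> {m..T - m}" "\<And>t. t \<in> {m..T - m} \<Longrightarrow> \<bar>d2 t\<bar> \<le> \<bar>d2 (t0 m)\<bar>"
    "\<bar>d2 (t0 m)\<bar> = real (min (min ts (T - ts)) m) / real m * \<bar>Dl\<bar>" by auto
qed

end

lemma A_meas:
  assumes [measurable]: "\<And>t. e t \<in> borel_measurable M"
  shows "(\<lambda>\<omega>. A_stat (\<lambda>t \<omega>. mu t + e t \<omega>) T \<omega>) \<in> borel_measurable M"
  unfolding A_stat_def by measurable

lemma D_meas:
  assumes [measurable]: "\<And>t. e t \<in> borel_measurable M"
  shows "(\<lambda>\<omega>. sqrt (real m) * D_stat (\<lambda>t \<omega>. mu t + e t \<omega>) T m \<omega>) \<in> borel_measurable M"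
  unfolding D_stat_def by measurable

lemma powr_32: "real T > 0 \<Longrightarrow> real T powr (-3/2) = 1 / (real T * sqrt (real T))"
proof -
  assume T: "real T > 0"
  have e: "(3/2::real) = 1 + 1/2" by simp
  have "real T powr (3/2) = real T powr 1 * real T powr (1/2)" unfolding e by (rule powr_add)
  also have "\<dots> = real T * sqrt (real T)" using T by (simp add: powr_half_sqrt)
  finally have "real T powr (3/2) = real T * sqrt (real T)" .
  moreover have "real T powr (-3/2) = inverse (real T powr (3/2))"
  proof -
    have e2: "(-3/2::real) = - (3/2)" by simp
    show ?thesis unfolding e2 by (rule powr_minus)
  qed
  ultimately show ?thesis by (simp add: inverse_eq_divide)
qed

theorem theorem4p1:
  fixes M :: "'a measure"
    and e :: "nat \<Rightarrow> 'a \<Rightarrow> real"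
    and mu :: "nat \<Rightarrow> nat \<Rightarrow> real"
    and tstar :: "nat \<Rightarrow> nat"
  assumes "prob_space M"
    and "\<And>t. e t \<in> borel_measurable M"
    and "\<And>t. t \<ge> 1 \<Longrightarrow> integrable M (e t) \<and> integral\<^sup>L M (e t) = 0"
    and "\<forall>\<^sub>F T in sequentially. 1 < tstar T \<and> tstar T < T \<and>
           (\<forall>t\<in>{1..T}. mu T t = (if t \<le> tstar T then mu T 1 else mu T T))"
    and "assumption_A M e"
  shows "(diverges_in_prob M (\<lambda>T \<omega>. A_stat (\<lambda>t \<omega>. mu T t + e t \<omega>) T \<omega>) \<longleftrightarrow>
            filterlim (\<lambda>T. real T powr (-3/2) * real (tstar T) * real (T - tstar T)
                           * \<bar>mu T (tstar T + 1) - mu T (tstar T)\<bar>) at_top sequentially)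
       \<and> (\<forall>tT :: nat \<Rightarrow> nat. filterlim tT at_top sequentially \<and>
            ((\<lambda>T. real (tT T) / real T) \<longlonglongrightarrow> 0) \<longrightarrow>
            (diverges_in_prob M (\<lambda>T \<omega>. sqrt (real (tT T)) * D_stat (\<lambda>t \<omega>. mu T t + e t \<omega>) T (tT T) \<omega>) \<longleftrightarrow>
             filterlim (\<lambda>T. real (min (min (tstar T) (T - tstar T)) (tT T)) / sqrt (real (tT T))
                           * \<bar>mu T (tstar T + 1) - mu T (tstar T)\<bar>) at_top sequentially))"

proof -
  interpret P: prob_space M by (rule assms(1))
  note emeas[measurable] = assms(2)
  obtain sig kap W1 W2 where sig: "sig > 0" and kap: "0 < kap" "kap < 1/2"
    and WW: "\<forall>T. std_wiener_on M (real T / 2) (W1 T) \<and> std_wiener_on M (real T / 2) (W2 T) \<and>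
              indep_processes_on M (real T / 2) (W1 T) (W2 T)"
    and OP1: "OP1_sup M (\<lambda>T. {1 .. real T / 2})
           (\<lambda>T x \<omega>. x powr (-kap) * \<bar>(\<Sum>s=1..nat \<lfloor>x\<rfloor>. e s \<omega>) - sig * W1 T x \<omega>\<bar>)"
    and OP2: "OP1_sup M (\<lambda>T. {real T / 2 .. real T - 1})
           (\<lambda>T x \<omega>. (real T - x) powr (-kap) *
              \<bar>(\<Sum>s\<in>{nat \<lfloor>x\<rfloor> + 1 .. T}. e s \<omega>) - sig * W2 T (real T - x) \<omega>\<bar>)"
    using assms(5) unfolding assumption_A_def by blast
  interpret S: setupA M e sig kap W1 W2
    using assms(1,2) sig kap WW OP1 OP2 by unfold_locales auto
  obtain T1 where T1: "\<And>T. T \<ge> T1 \<Longrightarrow> 1 < tstar T \<and> tstar T < T \<and>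
           (\<forall>t\<in>{1..T}. mu T t = (if t \<le> tstar T then mu T 1 else mu T T))"
    using assms(4) unfolding eventually_sequentially by blast
  have Xsum: "(\<Sum>s=1..t. mu T s + e s \<omega>) = (\<Sum>s=1..t. mu T s) + S.E t \<omega>" for T t \<omega>
    unfolding S.E_def by (simp add: sum.distrib)
  have part1: "diverges_in_prob M (\<lambda>T \<omega>. A_stat (\<lambda>t \<omega>. mu T t + e t \<omega>) T \<omega>) \<longleftrightarrow>
            filterlim (\<lambda>T. real T powr (-3/2) * real (tstar T) * real (T - tstar T)
                           * \<bar>mu T (tstar T + 1) - mu T (tstar T)\<bar>) at_top sequentially"
  proof (rule div_iff[OF assms(1) _ tightP_cmult[OF S.G_tight, of 2]])
    fix T C show "{\<omega>\<in>space M. A_stat (\<lambda>t \<omega>. mu T t + e t \<omega>) T \<omega> \<le> C} \<in> sets M"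
      using A_meas[OF assms(2), where mu="mu T" and T=T] by measurable
  next
    show "\<forall>\<^sub>F T in sequentially. \<forall>\<omega>\<in>space M. \<bar>A_stat (\<lambda>t \<omega>. mu T t + e t \<omega>) T \<omega> -
        real T powr (-3/2) * real (tstar T) * real (T - tstar T) * \<bar>mu T (tstar T + 1) - mu T (tstar T)\<bar>\<bar>
        \<le> 2 * (S.Gmax T \<omega> / sqrt (real T))"
      unfolding eventually_sequentially
    proof (intro exI[of _ "max T1 2"] allI impI ballI)
      fix T :: nat and \<omega> assume T: "max T1 2 \<le> T" and w: "\<omega> \<in> space M"
      have TT: "1 < tstar T \<and> tstar T < T \<and> (\<forall>t\<in>{1..T}. mu T t = (if t \<le> tstar T then mu T 1 else mu T T))"
        using T1 T by auto
      interpret D: drift "mu T" "tstar T" T using TT by unfold_locales auto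
      define b where "b t = S.E t \<omega> - real t / real T * S.E T \<omega>" for t
      have eqA: "A_stat (\<lambda>t \<omega>. mu T t + e t \<omega>) T \<omega> = (1 / sqrt (real T)) * Max ((\<lambda>t. \<bar>D.dA t + b t\<bar>) ` {1..T})"
        unfolding A_stat_def Xsum D.dA_def b_def D.c_def by (simp add: algebra_simps)
      have "\<bar>Max ((\<lambda>t. \<bar>D.dA t + b t\<bar>) ` {1..T}) - \<bar>D.dA (tstar T)\<bar>\<bar> \<le> 2 * S.Gmax T \<omega>"
      proof (rule max_perturb)
        show "tstar T \<in> {1..T}" using TT by simp
        show "\<forall>t\<in>{1..T}. \<bar>D.dA t\<bar> \<le> \<bar>D.dA (tstar T)\<bar>" using D.dA_max by simp
        show "\<forall>t\<in>{1..T}. \<bar>b t\<bar> \<le> 2 * S.Gmax T \<omega>"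
        proof
          fix t assume t: "t \<in> {1..T}"
          have g1: "\<bar>S.E t \<omega>\<bar> \<le> S.Gmax T \<omega>" using t by (intro S.Gmax_ge) simp
          have g2: "\<bar>S.E T \<omega>\<bar> \<le> S.Gmax T \<omega>" by (intro S.Gmax_ge) simp
          have q: "0 \<le> real t / real T" "real t / real T \<le> 1" using t by auto
          have "\<bar>real t / real T * S.E T \<omega>\<bar> \<le> 1 * \<bar>S.E T \<omega>\<bar>"
            unfolding abs_mult using q by (intro mult_right_mono) auto
          then have g3: "\<bar>real t / real T * S.E T \<omega>\<bar> \<le> S.Gmax T \<omega>" using g2 by simp
          have "\<bar>b t\<bar> \<le> \<bar>S.E t \<omega>\<bar> + \<bar>real t / real T * S.E T \<omega>\<bar>" unfolding b_def by (rule abs_triangle_ineq4)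
          also have "\<dots> \<le> S.Gmax T \<omega> + S.Gmax T \<omega>" by (rule add_mono[OF g1 g3])
          finally show "\<bar>b t\<bar> \<le> 2 * S.Gmax T \<omega>" by simp
        qed
      qed simp
      then have "\<bar>(1 / sqrt (real T)) * Max ((\<lambda>t. \<bar>D.dA t + b t\<bar>) ` {1..T}) - (1 / sqrt (real T)) * \<bar>D.dA (tstar T)\<bar>\<bar>
          \<le> (1 / sqrt (real T)) * (2 * S.Gmax T \<omega>)"
      proof -
        assume h: "\<bar>Max ((\<lambda>t. \<bar>D.dA t + b t\<bar>) ` {1..T}) - \<bar>D.dA (tstar T)\<bar>\<bar> \<le> 2 * S.Gmax T \<omega>"
        have a0: "\<bar>1 / sqrt (real T)\<bar> = 1 / sqrt (real T)" by simp
        show ?thesis unfolding right_diff_distrib[symmetric] abs_mult a0 by (rule mult_left_mono[OF h]) simp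
      qed
      moreover have "real T powr (-3/2) * real (tstar T) * real (T - tstar T) * \<bar>mu T (tstar T + 1) - mu T (tstar T)\<bar>
          = (1 / sqrt (real T)) * \<bar>D.dA (tstar T)\<bar>"
      proof -
        have "real (T - tstar T) = real T - real (tstar T)" using TT by simp
        moreover have "real T > 0" using TT by simp
        ultimately show ?thesis unfolding D.dA_ts D.Dl_def using powr_32[of T] by simp
      qed
      ultimately show "\<bar>A_stat (\<lambda>t \<omega>. mu T t + e t \<omega>) T \<omega> -
        real T powr (-3/2) * real (tstar T) * real (T - tstar T) * \<bar>mu T (tstar T + 1) - mu T (tstar T)\<bar>\<bar>
        \<le> 2 * (S.Gmax T \<omega> / sqrt (real T))"
        unfolding eqA by simp
    qed
  qed simp
  have part2: "diverges_in_prob M (\<lambda>T \<omega>. sqrt (real (tT T)) * D_stat (\<lambda>t \<omega>. mu T t + e t \<omega>) T (tT T) \<omega>) \<longleftrightarrow>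
             filterlim (\<lambda>T. real (min (min (tstar T) (T - tstar T)) (tT T)) / sqrt (real (tT T))
                           * \<bar>mu T (tstar T + 1) - mu T (tstar T)\<bar>) at_top sequentially"
    if tT1: "filterlim tT at_top sequentially" and tT2: "((\<lambda>T. real (tT T) / real T) \<longlonglongrightarrow> 0)" for tT :: "nat \<Rightarrow> nat"
  proof -
    have ev1: "\<forall>\<^sub>F T in sequentially. 1 \<le> tT T" using tT1 unfolding filterlim_at_top by blast
    have "\<forall>\<^sub>F T in sequentially. real (tT T) / real T < 1/2" using tT2 by (rule order_tendstoD) simp
    then obtain T2 where T2: "\<And>T. T \<ge> T2 \<Longrightarrow> real (tT T) / real T < 1/2" unfolding eventually_sequentially by blast
    obtain T3 where T3: "\<And>T. T \<ge> T3 \<Longrightarrow> 1 \<le> tT T" using ev1 unfolding eventually_sequentially by blast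
    show ?thesis
    proof (rule div_iff[OF assms(1) _ S.ND_tight[OF ev1]])
      fix T C show "{\<omega>\<in>space M. sqrt (real (tT T)) * D_stat (\<lambda>t \<omega>. mu T t + e t \<omega>) T (tT T) \<omega> \<le> C} \<in> sets M"
        using D_meas[OF assms(2), where m="tT T" and mu="mu T" and T=T] by measurable
    next
      show "\<forall>\<^sub>F T in sequentially. \<forall>\<omega>\<in>space M. \<bar>sqrt (real (tT T)) * D_stat (\<lambda>t \<omega>. mu T t + e t \<omega>) T (tT T) \<omega> -
         real (min (min (tstar T) (T - tstar T)) (tT T)) / sqrt (real (tT T)) * \<bar>mu T (tstar T + 1) - mu T (tstar T)\<bar>\<bar>
         \<le> S.ND tT T \<omega>"
        unfolding eventually_sequentially
      proof (intro exI[of _ "max (max T1 2) (max T2 T3)"] allI impI ballI)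
        fix T :: nat and \<omega> assume T: "max (max T1 2) (max T2 T3) \<le> T" and w: "\<omega> \<in> space M"
        have TT: "1 < tstar T \<and> tstar T < T \<and> (\<forall>t\<in>{1..T}. mu T t = (if t \<le> tstar T then mu T 1 else mu T T))"
          using T1 T by auto
        interpret D: drift "mu T" "tstar T" T using TT by unfold_locales auto
        define m where "m = tT T"
        have m1: "1 \<le> m" unfolding m_def using T3 T by auto
        have "real m / real T < 1/2" unfolding m_def by (rule T2) (use T in auto)
        moreover have Tp: "real T > 0" using T by simp
        ultimately have "real m < 1/2 * real T" by (simp add: pos_divide_less_eq)
        then have "2 * real m < real T" by linarith
        then have m2: "2 * m \<le> T" by linarith
        have T2': "2 \<le> T" using T by auto
        define b where "b t = S.E t \<omega> / real t - (S.E T \<omega> - S.E t \<omega>) / real (T - t)" for t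
        have eqD: "D_stat (\<lambda>t \<omega>. mu T t + e t \<omega>) T m \<omega> = Max ((\<lambda>t. \<bar>D.d2 t + b t\<bar>) ` {m..T - m})"
          unfolding D_stat_def
        proof (rule arg_cong[where f=Max], rule image_cong[OF refl])
          fix t assume t: "t \<in> {m..T - m}"
          have "t \<le> T - m" using t by simp
          then have tT: "t \<le> T" by arith
          have s1: "(\<Sum>s=t+1..T. mu T s + e s \<omega>) = (D.c T - D.c t) + (S.E T \<omega> - S.E t \<omega>)"
          proof -
            have "(\<Sum>s=t+1..T. mu T s + e s \<omega>) = (\<Sum>s=t+1..T. mu T s) + (\<Sum>s=t+1..T. e s \<omega>)"
              by (simp add: sum.distrib)
            moreover have "D.c T = D.c t + (\<Sum>s=t+1..T. mu T s)" unfolding D.c_def by (rule sum_split_at[OF tT])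
            moreover have "S.E T \<omega> = S.E t \<omega> + (\<Sum>s=t+1..T. e s \<omega>)" by (rule S.E_split[OF tT])
            ultimately show ?thesis by simp
          qed
          show "\<bar>(\<Sum>s=1..t. mu T s + e s \<omega>) / real t - (\<Sum>s=t+1..T. mu T s + e s \<omega>) / real (T - t)\<bar> = \<bar>D.d2 t + b t\<bar>"
            unfolding s1 Xsum D.d2_def b_def D.c_def[symmetric] by (simp add: add_divide_distrib diff_divide_distrib algebra_simps)
        qed
        have sm: "sqrt (real m) > 0" using m1 by simp
        have "\<bar>Max ((\<lambda>t. \<bar>D.d2 t + b t\<bar>) ` {m..T - m}) - \<bar>D.d2 (D.t0 m)\<bar>\<bar> \<le> S.ND tT T \<omega> / sqrt (real m)"
        proof (rule max_perturb)
          show "D.t0 m \<in> {m..T - m}" by (rule D.d2_max(1)[OF m1 m2])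
          show "\<forall>t\<in>{m..T - m}. \<bar>D.d2 t\<bar> \<le> \<bar>D.d2 (D.t0 m)\<bar>" using D.d2_max(2)[OF m1 m2] by blast
          show "\<forall>t\<in>{m..T - m}. \<bar>b t\<bar> \<le> S.ND tT T \<omega> / sqrt (real m)"
          proof
            fix t assume t: "t \<in> {m..T - m}"
            have "sqrt (real (tT T)) * \<bar>b t\<bar> \<le> S.ND tT T \<omega>" unfolding b_def
              using S.ND_bound[where m=tT and T=T, OF T2' m1[unfolded m_def] m2[unfolded m_def]] t unfolding m_def by auto
            then show "\<bar>b t\<bar> \<le> S.ND tT T \<omega> / sqrt (real m)" using sm unfolding m_def
              by (simp add: le_divide_eq mult.commute)
          qed
        qed simp
        then have "\<bar>sqrt (real m) * Max ((\<lambda>t. \<bar>D.d2 t + b t\<bar>) ` {m..T - m}) - sqrt (real m) * \<bar>D.d2 (D.t0 m)\<bar>\<bar>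
            \<le> sqrt (real m) * (S.ND tT T \<omega> / sqrt (real m))"
        proof -
          assume h: "\<bar>Max ((\<lambda>t. \<bar>D.d2 t + b t\<bar>) ` {m..T - m}) - \<bar>D.d2 (D.t0 m)\<bar>\<bar> \<le> S.ND tT T \<omega> / sqrt (real m)"
          have a0: "\<bar>sqrt (real m)\<bar> = sqrt (real m)" by simp
          show ?thesis unfolding right_diff_distrib[symmetric] abs_mult a0 by (rule mult_left_mono[OF h]) simp
        qed
        also have "\<dots> = S.ND tT T \<omega>" using sm by simp
        finally have fin: "\<bar>sqrt (real m) * Max ((\<lambda>t. \<bar>D.d2 t + b t\<bar>) ` {m..T - m}) - sqrt (real m) * \<bar>D.d2 (D.t0 m)\<bar>\<bar>
            \<le> S.ND tT T \<omega>" .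
        have geq: "sqrt (real m) * \<bar>D.d2 (D.t0 m)\<bar> =
            real (min (min (tstar T) (T - tstar T)) m) / sqrt (real m) * \<bar>mu T (tstar T + 1) - mu T (tstar T)\<bar>"
        proof -
          have "sqrt (real m) * \<bar>D.d2 (D.t0 m)\<bar> = sqrt (real m) * (real (min (min (tstar T) (T - tstar T)) m) / real m * \<bar>D.Dl\<bar>)"
            by (simp only: D.d2_max(3)[OF m1 m2])
          also have "\<dots> = real (min (min (tstar T) (T - tstar T)) m) / sqrt (real m) * \<bar>D.Dl\<bar>"
          proof -
            have q: "x / sqrt (real m) / sqrt (real m) = x / real m" for x
              by (simp add: divide_divide_eq_left)
            show ?thesis unfolding q[symmetric] using sm by (simp add: field_simps)
          qed
          finally show ?thesis unfolding D.Dl_def .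
        qed
        show "\<bar>sqrt (real (tT T)) * D_stat (\<lambda>t \<omega>. mu T t + e t \<omega>) T (tT T) \<omega> -
         real (min (min (tstar T) (T - tstar T)) (tT T)) / sqrt (real (tT T)) * \<bar>mu T (tstar T + 1) - mu T (tstar T)\<bar>\<bar>
         \<le> S.ND tT T \<omega>"
          unfolding eqD[unfolded m_def] using fin[unfolded m_def geq[unfolded m_def]] .
      qed
    qed
  qed
  show ?thesis using part1 part2 by blast
qed

end
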